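(* Let $G$ be an 8.8.8 lattice on a closed hyperbolic surface, in which every non-contractible cycle is long (length greater than $8$). Let $u$ be any vertex and $e=\{u,w\}$ any edge at $u$. Then the output $G'$ of the super-plaquette algorithm applied to $(G,e)$ satisfies $L(G')=9$. Moreover, $L(G')\le L(H)$ for every lattice $H$ satisfying all of the following: - $H$ is a tri-valent, 3-face-colourable multigraph embedded on the same surface; - its vertex set is $V(G)\setminus\{u,w'\}$ for some neighbour $w'$ of $u$; - every edge of $H$ joins two vertices adjacent in $G$.
   Context: An 8.8.8 lattice is a tri-valent, 3-face-colourable tiling of a closed hyperbolic surface by octagons, with three octagons meeting at each vertex. In a 3-face-colourable tri-valent lattice, every edge borders two faces of different colours and is assigned the third colour. A face is identified with its set of boundary edges. The super-plaquette algorithm takes as input such a lattice $G$, a vertex $u$ and an edge $e=\{u,w\}$ of colour $D$. It proceeds as follows. 1. Let $S_1,S_2$ be the two faces containing $e$; these are the shrink faces. 2. Let the merge faces be all faces of colour $D$ that share an edge with $S_1$ or $S_2$. 3. For each shrink face $S$, of colour $P$, and each edge $f$ of colour $D$ on the boundary of $S$ that contains neither $u$ nor $w$, add a new parallel edge $f'$ of colour $T\notin\{D,P\}$, and a new face $\{f,f'\}$ of colour $P$. 4. Delete the shrink faces. 5. Add a new face of colour $D$ consisting of all new edges $f'$, together with all edges of merge faces that are not on a shrink face. 6. Delete the merge faces. 7. Delete $u$, $w$ and all edges lying on no face. $L(H)$ denotes the number of unordered pairs of vertices adjacent in $G$ but not adjacent in $H$. Pairs involving a vertex absent from $H$ also count.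 *)

theory Defs
  imports Main
begin

(* Vertices have type 'v, edges type 'e (abstract, so multigraphs are allowed),
   ends g is the 2-element set of endpoints of edge g, a face is identified with
   its set of boundary edges. *)

datatype colour = Col0 | Col1 | Col2

definition inc_edges :: "'e set \<Rightarrow> ('e \<Rightarrow> 'v set) \<Rightarrow> 'v \<Rightarrow> 'e set" where
  "inc_edges E ends v = {g \<in> E. v \<in> ends g}"

definition verts_of :: "('e \<Rightarrow> 'v set) \<Rightarrow> 'e set \<Rightarrow> 'v set" where
  "verts_of ends C = \<Union> (ends ` C)"

definition edge_conn :: "('e \<Rightarrow> 'v set) \<Rightarrow> 'e set \<Rightarrow> bool" where
  "edge_conn ends C = (\<forall>g\<in>C. \<forall>h\<in>C.
      (g, h) \<in> {(a, b). a \<in> C \<and> b \<in> C \<and> ends a \<inter> ends b \<noteq> {}}\<^sup>*)"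

definition is_cycle :: "('e \<Rightarrow> 'v set) \<Rightarrow> 'e set \<Rightarrow> bool" where
  "is_cycle ends C = (finite C \<and> C \<noteq> {} \<and>
      (\<forall>v \<in> verts_of ends C. card (inc_edges C ends v) = 2) \<and> edge_conn ends C)"

definition adj :: "'e set \<Rightarrow> ('e \<Rightarrow> 'v set) \<Rightarrow> 'v \<Rightarrow> 'v \<Rightarrow> bool" where
  "adj E ends x y = (\<exists>g\<in>E. ends g = {x, y})"

definition graph_conn :: "'v set \<Rightarrow> 'e set \<Rightarrow> ('e \<Rightarrow> 'v set) \<Rightarrow> bool" where
  "graph_conn V E ends = (\<forall>x\<in>V. \<forall>y\<in>V. (x, y) \<in> {(a, b). adj E ends a b}\<^sup>*)"

(* cellular embedding of a graph in a closed connected surface: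
   faces are simple cycles (disk faces), every edge lies on exactly two faces *)
definition cellular_map :: "'v set \<Rightarrow> 'e set \<Rightarrow> ('e \<Rightarrow> 'v set) \<Rightarrow> 'e set set \<Rightarrow> bool" where
  "cellular_map V E ends F = (finite V \<and> finite E \<and> finite F \<and> V \<noteq> {} \<and>
      (\<forall>g\<in>E. ends g \<subseteq> V \<and> card (ends g) = 2) \<and>
      (\<forall>f\<in>F. f \<subseteq> E \<and> is_cycle ends f) \<and>
      (\<forall>g\<in>E. card {f \<in> F. g \<in> f} = 2) \<and>
      graph_conn V E ends)"

definition trivalent :: "'v set \<Rightarrow> 'e set \<Rightarrow> ('e \<Rightarrow> 'v set) \<Rightarrow> bool" where
  "trivalent V E ends = (\<forall>v\<in>V. card (inc_edges E ends v) = 3)"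

definition proper_face_col :: "'e set set \<Rightarrow> ('e set \<Rightarrow> colour) \<Rightarrow> bool" where
  "proper_face_col F fc = (\<forall>f1\<in>F. \<forall>f2\<in>F. f1 \<noteq> f2 \<and> f1 \<inter> f2 \<noteq> {} \<longrightarrow> fc f1 \<noteq> fc f2)"

definition euler_char :: "'v set \<Rightarrow> 'e set \<Rightarrow> 'e set set \<Rightarrow> int" where
  "euler_char V E F = int (card V) - int (card E) + int (card F)"

(* the faces can be oriented coherently: o f g is the head of edge g when
   traversing face f; each face becomes a directed cycle and the two faces on
   an edge traverse it in opposite directions *)
definition orientable :: "('e \<Rightarrow> 'v set) \<Rightarrow> 'e set set \<Rightarrow> bool" where
  "orientable ends F = (\<exists>ori :: 'e set \<Rightarrow> 'e \<Rightarrow> 'v.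
      (\<forall>f\<in>F. \<forall>g\<in>f. ori f g \<in> ends g) \<and>
      (\<forall>f\<in>F. \<forall>x \<in> verts_of ends f. card {g \<in> f. ori f g = x} = 1) \<and>
      (\<forall>f1\<in>F. \<forall>f2\<in>F. \<forall>g. f1 \<noteq> f2 \<and> g \<in> f1 \<and> g \<in> f2 \<longrightarrow> ori f1 g \<noteq> ori f2 g))"

(* a simple cycle C is contractible iff it bounds a disk: a set S of faces
   whose mod-2 boundary is C and whose union has Euler characteristic 1 *)
definition contractible :: "('e \<Rightarrow> 'v set) \<Rightarrow> 'e set set \<Rightarrow> 'e set \<Rightarrow> bool" where
  "contractible ends F C = (\<exists>S \<subseteq> F.
      {g. odd (card {f \<in> S. g \<in> f})} = C \<and>
      euler_char (verts_of ends (\<Union>S)) (\<Union>S) S = 1)"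

definition long_noncontractible :: "'e set \<Rightarrow> ('e \<Rightarrow> 'v set) \<Rightarrow> 'e set set \<Rightarrow> bool" where
  "long_noncontractible E ends F = (\<forall>C \<subseteq> E.
      is_cycle ends C \<and> \<not> contractible ends F C \<longrightarrow> card C > 8)"

definition lattice_888 :: "'v set \<Rightarrow> 'e set \<Rightarrow> ('e \<Rightarrow> 'v set) \<Rightarrow> 'e set set \<Rightarrow> ('e set \<Rightarrow> colour) \<Rightarrow> bool" where
  "lattice_888 V E ends F fc = (cellular_map V E ends F \<and> trivalent V E ends \<and>
      (\<forall>f\<in>F. card f = 8) \<and> proper_face_col F fc \<and> euler_char V E F < 0)"

definition edge_col :: "'e set set \<Rightarrow> ('e set \<Rightarrow> colour) \<Rightarrow> 'e \<Rightarrow> colour" where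
  "edge_col F fc g = (THE c. \<forall>f\<in>F. g \<in> f \<longrightarrow> fc f \<noteq> c)"

definition Lcount :: "('v \<Rightarrow> 'v \<Rightarrow> bool) \<Rightarrow> ('v \<Rightarrow> 'v \<Rightarrow> bool) \<Rightarrow> nat" where
  "Lcount adjG adjH = card {{x, y} | x y. adjG x y \<and> \<not> adjH x y}"

(* ---- the super-plaquette algorithm ----
   Old edges g become Inl g; the new parallel edge f' created for the pair
   (shrink face S, edge f) is Inr (S, f). *)

definition sp_shrink :: "'e set set \<Rightarrow> 'e \<Rightarrow> 'e set set" where
  "sp_shrink F e = {f \<in> F. e \<in> f}"

definition sp_merge :: "'e set set \<Rightarrow> ('e set \<Rightarrow> colour) \<Rightarrow> 'e \<Rightarrow> 'e set set" where
  "sp_merge F fc e = {M \<in> F. fc M = edge_col F fc e \<and> (\<exists>S \<in> sp_shrink F e. M \<inter> S \<noteq> {})}"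

definition sp_new :: "'e set set \<Rightarrow> ('e set \<Rightarrow> colour) \<Rightarrow> ('e \<Rightarrow> 'v set) \<Rightarrow> 'v \<Rightarrow> 'v \<Rightarrow> 'e
                      \<Rightarrow> ('e set \<times> 'e) set" where
  "sp_new F fc ends u w e = {(S, f). S \<in> sp_shrink F e \<and> f \<in> S \<and>
      edge_col F fc f = edge_col F fc e \<and> u \<notin> ends f \<and> w \<notin> ends f}"

definition sp_ends :: "('e \<Rightarrow> 'v set) \<Rightarrow> 'e + ('e set \<times> 'e) \<Rightarrow> 'v set" where
  "sp_ends ends x = (case x of Inl g \<Rightarrow> ends g | Inr (S, f) \<Rightarrow> ends f)"

definition sp_faces :: "'e set set \<Rightarrow> ('e set \<Rightarrow> colour) \<Rightarrow> ('e \<Rightarrow> 'v set) \<Rightarrow> 'v \<Rightarrow> 'v \<Rightarrow> 'e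
                        \<Rightarrow> ('e + ('e set \<times> 'e)) set set" where
  "sp_faces F fc ends u w e =
     ((\<lambda>f. Inl ` f) ` (F - sp_shrink F e - sp_merge F fc e))
     \<union> {{Inl f, Inr (S, f)} | S f. (S, f) \<in> sp_new F fc ends u w e}
     \<union> {Inr ` sp_new F fc ends u w e \<union>
         Inl ` {g. (\<exists>M \<in> sp_merge F fc e. g \<in> M) \<and> (\<forall>S \<in> sp_shrink F e. g \<notin> S)}}"

definition sp_verts :: "'v set \<Rightarrow> 'v \<Rightarrow> 'v \<Rightarrow> 'v set" where
  "sp_verts V u w = V - {u, w}"

definition sp_edges :: "'e set set \<Rightarrow> ('e set \<Rightarrow> colour) \<Rightarrow> ('e \<Rightarrow> 'v set) \<Rightarrow> 'v \<Rightarrow> 'v \<Rightarrow> 'e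
                        \<Rightarrow> ('e + ('e set \<times> 'e)) set" where
  "sp_edges F fc ends u w e = {x. (\<exists>f \<in> sp_faces F fc ends u w e. x \<in> f) \<and>
                                  sp_ends ends x \<inter> {u, w} = {}}"

end

theory Submission
  imports Defs
begin


lemma card2E: "card X = 2 \<Longrightarrow> \<exists>a b. a \<noteq> b \<and> X = {a,b}"
  by (auto simp: card_2_iff)

lemma card2_eq: "card X = 2 \<Longrightarrow> a \<in> X \<Longrightarrow> b \<in> X \<Longrightarrow> a \<noteq> b \<Longrightarrow> X = {a,b}"
  by (auto simp: card_2_iff)

lemma card2_other: "card X = 2 \<Longrightarrow> a \<in> X \<Longrightarrow> \<exists>b. b \<noteq> a \<and> X = {a,b}"
  by (auto simp: card_2_iff)

lemma card3_other: "card X = 3 \<Longrightarrow> a \<in> X \<Longrightarrow> b \<in> X \<Longrightarrow> a \<noteq> b \<Longrightarrow>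
   \<exists>c. c \<noteq> a \<and> c \<noteq> b \<and> X = {a,b,c}"
  by (auto simp: card_3_iff)

lemma double_count:
  assumes "finite A" "finite B"
  shows "(\<Sum>a\<in>A. card {b\<in>B. R a b}) = (\<Sum>b\<in>B. card {a\<in>A. R a b})"
proof -
  have 1: "card {b\<in>B. R a b} = (\<Sum>b\<in>B. if R a b then 1 else 0)" for a
    using sum.inter_filter[OF assms(2), of "\<lambda>_. (1::nat)" "R a"] by simp
  have 2: "card {a\<in>A. R a b} = (\<Sum>a\<in>A. if R a b then 1 else 0)" for b
    using sum.inter_filter[OF assms(1), of "\<lambda>_. (1::nat)" "\<lambda>a. R a b"] by simp
  show ?thesis unfolding 1 2 by (rule sum.swap)
qed

lemma colour3: "(a::colour) \<noteq> b \<Longrightarrow> a \<noteq> c \<Longrightarrow> b \<noteq> c \<Longrightarrow> d \<noteq> a \<Longrightarrow> d \<noteq> b \<Longrightarrow> d = c"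
  by (cases a; cases b; cases c; cases d) auto

lemma colour_ex: "\<exists>c::colour. c \<noteq> a \<and> c \<noteq> b"
  by (cases a; cases b) (auto intro: exI[of _ Col0] exI[of _ Col1] exI[of _ Col2])

lemma three_exact:
  assumes "card (f \<inter> {g,h,k}) = 2" "g \<noteq> h" "g \<noteq> k" "h \<noteq> k"
  shows "(g\<in>f \<and> h\<in>f \<and> k\<notin>f) \<or> (g\<in>f \<and> k\<in>f \<and> h\<notin>f) \<or> (h\<in>f \<and> k\<in>f \<and> g\<notin>f)"
  using assms by (cases "g\<in>f"; cases "h\<in>f"; cases "k\<in>f") (auto simp: Int_insert_right)

lemma three_faces_case:
  assumes dist: "g\<noteq>h" "g\<noteq>k" "h\<noteq>k"
  and Fh: "card {f\<in>F. h\<in>f} = 2" and Fk: "card {f\<in>F. k\<in>f} = 2"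
  and ex: "\<forall>f\<in>F. g\<in>f \<or> h\<in>f \<or> k\<in>f \<longrightarrow> (g\<in>f \<and> h\<in>f \<and> k\<notin>f) \<or> (g\<in>f \<and> k\<in>f \<and> h\<notin>f) \<or> (h\<in>f \<and> k\<in>f \<and> g\<notin>f)"
  and AB: "A \<noteq> B" "{f\<in>F. g\<in>f} = {A,B}" "h \<in> A" "k \<in> B"
  shows "\<exists>f1 f2 f3. f1\<in>F \<and> f2\<in>F \<and> f3\<in>F \<and> {f\<in>F. g\<in>f} = {f1,f2} \<and> {f\<in>F. h\<in>f} = {f1,f3}
     \<and> {f\<in>F. k\<in>f} = {f2,f3} \<and> g\<in>f1 \<and> h\<in>f1 \<and> k\<notin>f1 \<and> g\<in>f2 \<and> k\<in>f2 \<and> h\<notin>f2 \<and> h\<in>f3 \<and> k\<in>f3 \<and> g\<notin>f3"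
proof -
  have A: "A \<in> F" "g \<in> A" and B: "B \<in> F" "g \<in> B" using AB by auto
  have kA: "k \<notin> A" using ex A AB dist by blast
  have hB: "h \<notin> B" using ex B AB dist by blast
  obtain C where C: "C \<noteq> A" "{f\<in>F. h\<in>f} = {A,C}" using card2_other[OF Fh, of A] A AB by auto
  have CF: "C \<in> F" "h \<in> C" using C by auto
  have gC: "g \<notin> C" using AB C hB by auto
  have kC: "k \<in> C" using ex CF gC by blast
  have "{f\<in>F. k\<in>f} = {B,C}" using card2_eq[OF Fk, of B C] B CF kC AB gC by auto
  then show ?thesis using A B CF kA hB gC kC AB C
    by (intro exI[of _ A] exI[of _ B] exI[of _ C] conjI) assumption+
qed

lemma three_faces_abs:
  assumes dist: "g\<noteq>h" "g\<noteq>k" "h\<noteq>k"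
  and Fg: "card {f\<in>F. g\<in>f} = 2" and Fh: "card {f\<in>F. h\<in>f} = 2" and Fk: "card {f\<in>F. k\<in>f} = 2"
  and ex: "\<forall>f\<in>F. g\<in>f \<or> h\<in>f \<or> k\<in>f \<longrightarrow> (g\<in>f \<and> h\<in>f \<and> k\<notin>f) \<or> (g\<in>f \<and> k\<in>f \<and> h\<notin>f) \<or> (h\<in>f \<and> k\<in>f \<and> g\<notin>f)"
  shows "\<exists>f1 f2 f3. f1\<in>F \<and> f2\<in>F \<and> f3\<in>F \<and> {f\<in>F. g\<in>f} = {f1,f2} \<and> {f\<in>F. h\<in>f} = {f1,f3}
     \<and> {f\<in>F. k\<in>f} = {f2,f3} \<and> g\<in>f1 \<and> h\<in>f1 \<and> k\<notin>f1 \<and> g\<in>f2 \<and> k\<in>f2 \<and> h\<notin>f2 \<and> h\<in>f3 \<and> k\<in>f3 \<and> g\<notin>f3"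
proof -
  obtain A B where AB: "A \<noteq> B" "{f\<in>F. g\<in>f} = {A,B}" using card2E[OF Fg] by auto
  have A: "A \<in> F" "g \<in> A" and B: "B \<in> F" "g \<in> B" using AB by auto
  have hA: "h \<in> A \<or> k \<in> A" using ex A by blast
  have hB: "h \<in> B \<or> k \<in> B" using ex B by blast
  have not_hh: False if "h \<in> A" "h \<in> B"
  proof -
    have kA: "k \<notin> A" "k \<notin> B" using ex A B that dist by blast+
    have eqh: "{f\<in>F. h\<in>f} = {A,B}" using card2_eq[OF Fh, of A B] A B that AB by auto
    obtain C where "C \<in> {f\<in>F. k\<in>f}" using Fk by (metis card.empty ex_in_conv zero_neq_numeral)
    then have C: "C \<in> F" "k \<in> C" by auto
    then have "g \<in> C \<or> h \<in> C" using ex by blast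
    then have "C \<in> {A,B}" using AB eqh C by auto
    then show False using kA C by auto
  qed
  have not_kk: False if "k \<in> A" "k \<in> B"
  proof -
    have kA: "h \<notin> A" "h \<notin> B" using ex A B that dist by blast+
    have eqh: "{f\<in>F. k\<in>f} = {A,B}" using card2_eq[OF Fk, of A B] A B that AB by auto
    obtain C where "C \<in> {f\<in>F. h\<in>f}" using Fh by (metis card.empty ex_in_conv zero_neq_numeral)
    then have C: "C \<in> F" "h \<in> C" by auto
    then have "g \<in> C \<or> k \<in> C" using ex by blast
    then have "C \<in> {A,B}" using AB eqh C by auto
    then show False using kA C by auto
  qed
  show ?thesis
  proof (cases "h \<in> A")
    case True
    then have "k \<in> B" using hB not_hh by blast
    then show ?thesis using three_faces_case[OF dist Fh Fk ex AB True] by blast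
  next
    case False
    then have "k \<in> A" "h \<in> B" using hA hB not_kk by blast+
    moreover have "{f\<in>F. g\<in>f} = {B,A}" using AB by auto
    ultimately show ?thesis using three_faces_case[OF dist Fh Fk ex, of B A] AB by blast
  qed
qed



locale lat888 =
  fixes V :: "'v set" and E :: "'e set" and ends :: "'e \<Rightarrow> 'v set"
    and F :: "'e set set" and fc :: "'e set \<Rightarrow> colour"
  assumes L: "lattice_888 V E ends F fc"
begin

lemma finV: "finite V" using L unfolding lattice_888_def cellular_map_def by auto
lemma finE: "finite E" using L unfolding lattice_888_def cellular_map_def by auto
lemma finF: "finite F" using L unfolding lattice_888_def cellular_map_def by auto
lemma ends_sub: "g\<in>E \<Longrightarrow> ends g \<subseteq> V" using L unfolding lattice_888_def cellular_map_def by auto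
lemma card_ends: "g\<in>E \<Longrightarrow> card (ends g) = 2" using L unfolding lattice_888_def cellular_map_def by auto
lemma face_sub: "f\<in>F \<Longrightarrow> f \<subseteq> E" using L unfolding lattice_888_def cellular_map_def by auto
lemma face_cyc: "f\<in>F \<Longrightarrow> is_cycle ends f" using L unfolding lattice_888_def cellular_map_def by auto
lemma two_faces: "g\<in>E \<Longrightarrow> card {f\<in>F. g\<in>f} = 2" using L unfolding lattice_888_def cellular_map_def by auto
lemma triv: "v\<in>V \<Longrightarrow> card (inc_edges E ends v) = 3" using L unfolding lattice_888_def trivalent_def by auto
lemma card8: "f\<in>F \<Longrightarrow> card f = 8" using L unfolding lattice_888_def by auto
lemma proper: "f1\<in>F \<Longrightarrow> f2\<in>F \<Longrightarrow> f1\<noteq>f2 \<Longrightarrow> g\<in>f1 \<Longrightarrow> g\<in>f2 \<Longrightarrow> fc f1 \<noteq> fc f2"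
  using L unfolding lattice_888_def proper_face_col_def by blast
lemma fin_ends: "g\<in>E \<Longrightarrow> finite (ends g)" using card_ends by (metis card.infinite zero_neq_numeral)
lemma ends2: "g\<in>E \<Longrightarrow> \<exists>a b. a\<noteq>b \<and> ends g = {a,b}" using card_ends card2E by blast

lemma inc_iff: "g \<in> inc_edges X ends v \<longleftrightarrow> g \<in> X \<and> v \<in> ends g"
  by (simp add: inc_edges_def)

lemma face_deg: "f\<in>F \<Longrightarrow> g\<in>f \<Longrightarrow> v\<in>ends g \<Longrightarrow> card (inc_edges f ends v) = 2"
  using face_cyc unfolding is_cycle_def verts_of_def by blast

lemma face_at_vertex:
  assumes f: "f\<in>F" and v: "inc_edges E ends v = {g,h,k}" and d: "g\<noteq>h" "g\<noteq>k" "h\<noteq>k"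
    and m: "g\<in>f \<or> h\<in>f \<or> k\<in>f"
  shows "(g\<in>f \<and> h\<in>f \<and> k\<notin>f) \<or> (g\<in>f \<and> k\<in>f \<and> h\<notin>f) \<or> (h\<in>f \<and> k\<in>f \<and> g\<notin>f)"
proof -
  have eq: "inc_edges f ends v = f \<inter> {g,h,k}"
    using face_sub[OF f] v unfolding inc_edges_def by blast
  have vin: "v \<in> ends g" "v \<in> ends h" "v \<in> ends k" using v unfolding inc_edges_def by blast+
  have "card (inc_edges f ends v) = 2" using m face_deg[OF f] vin by blast
  then have "card (f \<inter> {g,h,k}) = 2" using eq by simp
  then show ?thesis using three_exact[OF _ d] by blast
qed

lemma local_faces:
  assumes v: "inc_edges E ends v = {g,h,k}" and d: "g\<noteq>h" "g\<noteq>k" "h\<noteq>k"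
  shows "\<exists>f1 f2 f3. f1\<in>F \<and> f2\<in>F \<and> f3\<in>F \<and> {f\<in>F. g\<in>f} = {f1,f2} \<and> {f\<in>F. h\<in>f} = {f1,f3}
     \<and> {f\<in>F. k\<in>f} = {f2,f3} \<and> g\<in>f1 \<and> h\<in>f1 \<and> k\<notin>f1 \<and> g\<in>f2 \<and> k\<in>f2 \<and> h\<notin>f2 \<and> h\<in>f3 \<and> k\<in>f3 \<and> g\<notin>f3"
proof -
  have E: "g\<in>E" "h\<in>E" "k\<in>E" using v unfolding inc_edges_def by blast+
  show ?thesis
    apply (rule three_faces_abs[OF d two_faces[OF E(1)] two_faces[OF E(2)] two_faces[OF E(3)]])
    apply (intro ballI impI)
    apply (erule face_at_vertex[OF _ v d])
    apply assumption
    done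
qed

lemma edge_col_char:
  assumes g: "g\<in>E" and AB: "{f\<in>F. g\<in>f} = {A,B}"
  shows "A \<noteq> B \<and> fc A \<noteq> fc B \<and> edge_col F fc g \<noteq> fc A \<and> edge_col F fc g \<noteq> fc B"
proof -
  have AB1: "A \<noteq> B" using two_faces[OF g] AB by (cases "A = B") auto
  have ABF: "A\<in>F" "B\<in>F" "g\<in>A" "g\<in>B" using AB by auto
  have fcAB: "fc A \<noteq> fc B" using proper ABF AB1 by blast
  from colour_ex[of "fc A" "fc B"] obtain c where c: "c \<noteq> fc A" "c \<noteq> fc B" by (elim exE conjE)
  have mem: "f \<in> F \<Longrightarrow> g \<in> f \<Longrightarrow> f = A \<or> f = B" for f
  proof -
    assume "f \<in> F" "g \<in> f"
    then have "f \<in> {f\<in>F. g\<in>f}" by simp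
    then show ?thesis unfolding AB by simp
  qed
  have "edge_col F fc g = c"
    unfolding edge_col_def
  proof (rule the_equality)
    show "\<forall>f\<in>F. g \<in> f \<longrightarrow> fc f \<noteq> c"
    proof (intro ballI impI)
      fix f assume "f \<in> F" "g \<in> f"
      then have "f = A \<or> f = B" by (rule mem)
      then show "fc f \<noteq> c" using c by (elim disjE) simp_all
    qed
    fix c' assume "\<forall>f\<in>F. g \<in> f \<longrightarrow> fc f \<noteq> c'"
    then have "c' \<noteq> fc A" "c' \<noteq> fc B" using ABF by blast+
    then show "c' = c" using colour3[of "fc A" "fc B" c c'] c fcAB by simp
  qed
  then show ?thesis using AB1 fcAB c by simp
qed

lemma faces_of: assumes "g\<in>E" shows "\<exists>A B. {f\<in>F. g\<in>f} = {A,B}"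
proof -
  obtain a b where "{f\<in>F. g\<in>f} = {a,b}" using card2E[OF two_faces[OF assms]] by metis
  then show ?thesis by (intro exI)
qed

lemma col_ne: assumes "g\<in>E" "f\<in>F" "g\<in>f" shows "edge_col F fc g \<noteq> fc f"
proof -
  obtain A B where AB: "{f\<in>F. g\<in>f} = {A,B}" using faces_of[OF assms(1)] by metis
  have "f \<in> {A,B}" unfolding AB[symmetric] using assms by simp
  then show ?thesis using edge_col_char[OF assms(1) AB] by auto
qed

lemma col_eq: "g\<in>E \<Longrightarrow> {f\<in>F. g\<in>f} = {A,B} \<Longrightarrow> c \<noteq> fc A \<Longrightarrow> c \<noteq> fc B \<Longrightarrow> edge_col F fc g = c"
proof -
  assume a: "g\<in>E" "{f\<in>F. g\<in>f} = {A,B}" "c \<noteq> fc A" "c \<noteq> fc B"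
  note ch = edge_col_char[OF a(1) a(2)]
  have y: "fc A \<noteq> fc B" "edge_col F fc g \<noteq> fc A" "edge_col F fc g \<noteq> fc B" using ch by blast+
  have x: "fc A \<noteq> c" "fc B \<noteq> c" using a(3,4) by auto
  show ?thesis using colour3[OF y(1) x y(2) y(3)] .
qed

lemma inc3: assumes "v\<in>V" "g \<in> inc_edges E ends v" "h \<in> inc_edges E ends v" "g\<noteq>h"
  shows "\<exists>k. k\<noteq>g \<and> k\<noteq>h \<and> inc_edges E ends v = {g,h,k}"
  by (rule card3_other[OF triv[OF assms(1)] assms(2-4)])

lemma alt:
  assumes f: "f\<in>F" "g\<in>f" "h\<in>f" "g\<noteq>h" and v: "v\<in>ends g" "v\<in>ends h"
  shows "edge_col F fc g \<noteq> edge_col F fc h"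
proof -
  have gE: "g\<in>E" "h\<in>E" using face_sub f by auto
  have vV: "v\<in>V" using ends_sub gE v by auto
  have gi: "g \<in> inc_edges E ends v" "h \<in> inc_edges E ends v" using gE v by (simp_all add: inc_iff)
  obtain k where k: "k\<noteq>g" "k\<noteq>h" "inc_edges E ends v = {g,h,k}"
    using inc3[OF vV gi f(4)] by metis
  from local_faces[OF k(3) f(4) k(1)[symmetric] k(2)[symmetric]]
  obtain f1 f2 f3 where ff: "f1\<in>F" "f2\<in>F" "f3\<in>F" "{f\<in>F. g\<in>f} = {f1,f2}" "{f\<in>F. h\<in>f} = {f1,f3}"
     "{f\<in>F. k\<in>f} = {f2,f3}" "g\<in>f1" "h\<in>f1" "k\<notin>f1" "g\<in>f2" "k\<in>f2" "h\<notin>f2" "h\<in>f3" "k\<in>f3" "g\<notin>f3"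
    by (elim exE conjE)
  have d: "f1 \<noteq> f2" "f1 \<noteq> f3" "f2\<noteq>f3" using ff by auto
  have c12: "fc f1 \<noteq> fc f2" using proper[OF ff(1) ff(2) d(1) ff(7) ff(10)] .
  have c13: "fc f1 \<noteq> fc f3" using proper[OF ff(1) ff(3) d(2) ff(8) ff(13)] .
  have c23: "fc f2 \<noteq> fc f3" using proper[OF ff(2) ff(3) d(3) ff(11) ff(14)] .
  have "edge_col F fc g = fc f3" using col_eq[OF gE(1) ff(4)] c13 c23 by simp
  moreover have "edge_col F fc h = fc f2" using col_eq[OF gE(2) ff(5)] c12 c23 by simp
  ultimately show ?thesis using c23 by simp
qed

lemma simple:
  assumes g: "g1\<in>E" "g2\<in>E" "ends g1 = ends g2" shows "g1 = g2"
proof (rule ccontr)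
  assume ne: "g1 \<noteq> g2"
  obtain x y where xy: "x\<noteq>y" "ends g1 = {x,y}" using ends2 g by blast
  have xV: "x\<in>V" using ends_sub g xy by auto
  have xg: "x \<in> ends g1" "x \<in> ends g2" using xy g(3) by auto
  have gi: "g1 \<in> inc_edges E ends x" "g2 \<in> inc_edges E ends x" using g(1,2) xg by (simp_all add: inc_iff)
  obtain k where k: "k\<noteq>g1" "k\<noteq>g2" "inc_edges E ends x = {g1,g2,k}"
    using inc3[OF xV gi ne] by metis
  obtain f1 where f1: "f1\<in>F" "g1\<in>f1" "g2\<in>f1"
    using local_faces[OF k(3) ne k(1)[symmetric] k(2)[symmetric]] by blast
  have ix: "inc_edges f1 ends x = {g1,g2}"
    using card2_eq[OF face_deg[OF f1(1) f1(2)], of x g1 g2] f1 xy g ne by (auto simp: inc_iff)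
  have iy: "inc_edges f1 ends y = {g1,g2}"
    using card2_eq[OF face_deg[OF f1(1) f1(2)], of y g1 g2] f1 xy g ne by (auto simp: inc_iff)
  let ?R = "{(a, b). a \<in> f1 \<and> b \<in> f1 \<and> ends a \<inter> ends b \<noteq> {}}"
  have cl: "b \<in> {g1,g2}" if "(g1,b) \<in> ?R\<^sup>*" for b
    using that
  proof (induction rule: rtrancl_induct)
    case base then show ?case by simp
  next
    case (step a b)
    then have "ends a = {x,y}" using xy g by auto
    then have xyb: "x \<in> ends b \<or> y \<in> ends b" using step by auto
    have bf: "b \<in> f1" using step by auto
    show ?case
    proof (cases "x \<in> ends b")
      case True then have "b \<in> inc_edges f1 ends x" using bf by (simp add: inc_iff)
      then show ?thesis using ix by simp
    next
      case False then have "y \<in> ends b" using xyb by simp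
      then have "b \<in> inc_edges f1 ends y" using bf by (simp add: inc_iff)
      then show ?thesis using iy by simp
    qed
  qed
  have ec: "edge_conn ends f1" using face_cyc[OF f1(1)] unfolding is_cycle_def by simp
  have "f1 \<subseteq> {g1,g2}"
  proof
    fix b assume "b \<in> f1"
    then have "(g1,b) \<in> ?R\<^sup>*" using ec f1(2) unfolding edge_conn_def by blast
    then show "b \<in> {g1,g2}" by (rule cl)
  qed
  then have "card f1 \<le> card {g1,g2}" by (intro card_mono) auto
  then have "card f1 \<le> 2" using ne by simp
  then show False using card8[OF f1(1)] by simp
qed

end


lemma sp_edges_iff: "x \<in> sp_edges F fc ends u w e \<longleftrightarrow>
   (\<exists>f\<in>sp_faces F fc ends u w e. x\<in>f) \<and> sp_ends ends x \<inter> {u,w} = {}"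
  by (simp add: sp_edges_def)

lemma Inl_faces: "(\<exists>f\<in>sp_faces F fc ends u w e. Inl g \<in> f) \<longleftrightarrow>
   (\<exists>f\<in>F. f \<notin> sp_shrink F e \<and> f \<notin> sp_merge F fc e \<and> g\<in>f) \<or> (\<exists>S. (S,g) \<in> sp_new F fc ends u w e)
   \<or> ((\<exists>M\<in>sp_merge F fc e. g\<in>M) \<and> (\<forall>S\<in>sp_shrink F e. g\<notin>S))"
  (is "?L \<longleftrightarrow> ?A \<or> ?B \<or> ?C")
proof
  assume ?L
  then obtain f where f: "f \<in> sp_faces F fc ends u w e" "Inl g \<in> f" by blast
  let ?N = "sp_new F fc ends u w e"
  let ?X = "{g. (\<exists>M \<in> sp_merge F fc e. g \<in> M) \<and> (\<forall>S \<in> sp_shrink F e. g \<notin> S)}"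
  have "f \<in> (\<lambda>f. Inl ` f) ` (F - sp_shrink F e - sp_merge F fc e) \<or>
        f \<in> {{Inl f, Inr (S, f)} | S f. (S, f) \<in> ?N} \<or> f = Inr ` ?N \<union> Inl ` ?X"
    using f(1) unfolding sp_faces_def by blast
  then show "?A \<or> ?B \<or> ?C"
  proof (elim disjE)
    assume "f \<in> (\<lambda>f. Inl ` f) ` (F - sp_shrink F e - sp_merge F fc e)"
    then obtain f0 where "f0 \<in> F - sp_shrink F e - sp_merge F fc e" "f = Inl ` f0" by blast
    then show ?thesis using f(2) by auto
  next
    assume "f \<in> {{Inl f, Inr (S, f)} | S f. (S, f) \<in> ?N}"
    then obtain S f0 where "(S,f0) \<in> ?N" "f = {Inl f0, Inr (S,f0)}" by blast
    then show ?thesis using f(2) by auto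
  next
    assume "f = Inr ` ?N \<union> Inl ` ?X"
    then have "g \<in> ?X" using f(2) by auto
    then show ?thesis by blast
  qed
next
  let ?N = "sp_new F fc ends u w e"
  let ?X = "{g. (\<exists>M \<in> sp_merge F fc e. g \<in> M) \<and> (\<forall>S \<in> sp_shrink F e. g \<notin> S)}"
  assume "?A \<or> ?B \<or> ?C"
  then show ?L
  proof (elim disjE)
    assume ?A
    then obtain f0 where f0: "f0 \<in> F - sp_shrink F e - sp_merge F fc e" "g \<in> f0" by blast
    have "Inl ` f0 \<in> (\<lambda>f. Inl ` f) ` (F - sp_shrink F e - sp_merge F fc e)" using f0(1) by (rule imageI)
    then have "Inl ` f0 \<in> sp_faces F fc ends u w e" unfolding sp_faces_def by (intro UnI1)
    then show ?L using f0(2) by blast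
  next
    assume ?B
    then obtain S where S: "(S,g) \<in> ?N" by blast
    then have "{Inl g, Inr (S,g)} \<in> {{Inl f, Inr (S, f)} | S f. (S, f) \<in> ?N}" by blast
    then have "{Inl g, Inr (S,g)} \<in> sp_faces F fc ends u w e" unfolding sp_faces_def by (intro UnI1 UnI2)
    then show ?L by blast
  next
    assume ?C
    then have "g \<in> ?X" by simp
    then have mem: "Inl g \<in> Inr ` ?N \<union> Inl ` ?X" by (intro UnI2 imageI)
    have fa: "Inr ` ?N \<union> Inl ` ?X \<in> sp_faces F fc ends u w e" unfolding sp_faces_def by (rule UnI2, rule singletonI)
    show ?L using mem fa by (rule bexI[where P="\<lambda>f. Inl g \<in> f"])
  qed
qed

lemma Inr_faces: "(\<exists>f\<in>sp_faces F fc ends u w e. Inr p \<in> f) \<Longrightarrow> p \<in> sp_new F fc ends u w e"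
proof -
  assume "\<exists>f\<in>sp_faces F fc ends u w e. Inr p \<in> f"
  then obtain f where f: "f \<in> sp_faces F fc ends u w e" "Inr p \<in> f" by blast
  let ?N = "sp_new F fc ends u w e"
  let ?X = "{g. (\<exists>M \<in> sp_merge F fc e. g \<in> M) \<and> (\<forall>S \<in> sp_shrink F e. g \<notin> S)}"
  have "f \<in> (\<lambda>f. Inl ` f) ` (F - sp_shrink F e - sp_merge F fc e) \<or>
        f \<in> {{Inl f, Inr (S, f)} | S f. (S, f) \<in> ?N} \<or> f = Inr ` ?N \<union> Inl ` ?X"
    using f(1) unfolding sp_faces_def by blast
  then show ?thesis
  proof (elim disjE)
    assume "f \<in> (\<lambda>f. Inl ` f) ` (F - sp_shrink F e - sp_merge F fc e)"
    then show ?thesis using f(2) by auto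
  next
    assume "f \<in> {{Inl f, Inr (S, f)} | S f. (S, f) \<in> ?N}"
    then obtain S f0 where "(S,f0) \<in> ?N" "f = {Inl f0, Inr (S,f0)}" by blast
    then show ?thesis using f(2) by auto
  next
    assume "f = Inr ` ?N \<union> Inl ` ?X"
    then show ?thesis using f(2) by auto
  qed
qed

lemma new_pair: assumes "(S,f) \<in> sp_new F fc ends u w e" shows "{Inl f, Inr (S,f)} \<in> sp_faces F fc ends u w e"
proof -
  have "{Inl f, Inr (S,f)} \<in> {{Inl f, Inr (S, f)} | S f. (S, f) \<in> sp_new F fc ends u w e}" using assms by blast
  then show ?thesis unfolding sp_faces_def by (intro UnI1 UnI2)
qed

lemma card_compl: "finite A \<Longrightarrow> card {x\<in>A. \<not> P x} = card A - card {x\<in>A. P x}"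
proof -
  assume fa: "finite A"
  have "{x\<in>A. \<not> P x} = A - {x\<in>A. P x}" by blast
  then show ?thesis using card_Diff_subset[of "{x\<in>A. P x}" A] fa by simp
qed

context lat888
begin

lemma cyc_verts_card:
  assumes C: "is_cycle ends C" "C \<subseteq> E"
  shows "card (verts_of ends C) = card C"
proof -
  have fC: "finite C" using C unfolding is_cycle_def by simp
  have fV: "finite (verts_of ends C)" unfolding verts_of_def using fC fin_ends C(2) by blast
  have "(\<Sum>v\<in>verts_of ends C. card {g\<in>C. v \<in> ends g}) = (\<Sum>g\<in>C. card {v\<in>verts_of ends C. v \<in> ends g})"
    by (rule double_count[OF fV fC])
  moreover have "(\<Sum>v\<in>verts_of ends C. card {g\<in>C. v \<in> ends g}) = (\<Sum>v\<in>verts_of ends C. 2)"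
  proof (rule sum.cong)
    fix v assume "v \<in> verts_of ends C"
    then have "card (inc_edges C ends v) = 2" using C(1) unfolding is_cycle_def by blast
    then show "card {g\<in>C. v \<in> ends g} = 2" unfolding inc_edges_def .
  qed simp
  moreover have "(\<Sum>g\<in>C. card {v\<in>verts_of ends C. v \<in> ends g}) = (\<Sum>g\<in>C. 2)"
  proof (rule sum.cong)
    fix g assume g: "g \<in> C"
    have "{v\<in>verts_of ends C. v \<in> ends g} = ends g" using g unfolding verts_of_def by blast
    then show "card {v\<in>verts_of ends C. v \<in> ends g} = 2" using card_ends g C(2) by auto
  qed simp
  ultimately show ?thesis by simp
qed

lemma face_verts: "f\<in>F \<Longrightarrow> card (verts_of ends f) = 8"
  using cyc_verts_card[OF face_cyc face_sub] card8 by simp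

lemma col_count:
  assumes f: "f\<in>F" and D: "D \<noteq> fc f"
  shows "card {g\<in>f. edge_col F fc g = D} = 4"
proof -
  let ?fD = "{g\<in>f. edge_col F fc g = D}"
  have fin: "finite f" using face_cyc[OF f] unfolding is_cycle_def by simp
  have fV: "finite (verts_of ends f)" unfolding verts_of_def using fin fin_ends face_sub[OF f] by blast
  have "(\<Sum>v\<in>verts_of ends f. card {g\<in>?fD. v \<in> ends g}) = (\<Sum>g\<in>?fD. card {v\<in>verts_of ends f. v \<in> ends g})"
    by (rule double_count[OF fV]) (simp add: fin)
  moreover have "(\<Sum>v\<in>verts_of ends f. card {g\<in>?fD. v \<in> ends g}) = (\<Sum>v\<in>verts_of ends f. 1)"
  proof (rule sum.cong)
    fix v assume v: "v \<in> verts_of ends f"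
    then obtain g0 where g0: "g0 \<in> f" "v \<in> ends g0" unfolding verts_of_def by blast
    obtain g1 g2 where g12: "g1 \<noteq> g2" "inc_edges f ends v = {g1,g2}"
      using card2E[OF face_deg[OF f g0]] by metis
    have gm: "g1 \<in> f" "g2 \<in> f" "v \<in> ends g1" "v \<in> ends g2"
      using g12(2) unfolding inc_edges_def by blast+
    have c12: "edge_col F fc g1 \<noteq> edge_col F fc g2" using alt[OF f gm(1,2) g12(1) gm(3,4)] .
    have c1: "edge_col F fc g1 \<noteq> fc f" using col_ne face_sub f gm by blast
    have c2: "edge_col F fc g2 \<noteq> fc f" using col_ne face_sub f gm by blast
    have eq0: "{g\<in>?fD. v \<in> ends g} = {x\<in>inc_edges f ends v. edge_col F fc x = D}"
      unfolding inc_edges_def by auto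
    have eq: "{g\<in>?fD. v \<in> ends g} = {x\<in>{g1,g2}. edge_col F fc x = D}"
      unfolding eq0 g12(2) ..
    have "\<not> (edge_col F fc g1 \<noteq> D \<and> edge_col F fc g2 \<noteq> D)"
      using colour3[OF c12 c1 c2, of D] D by auto
    then have "edge_col F fc g1 = D \<and> edge_col F fc g2 \<noteq> D \<or> edge_col F fc g1 \<noteq> D \<and> edge_col F fc g2 = D"
      using c12 by auto
    then have "{x\<in>{g1,g2}. edge_col F fc x = D} = {g1} \<or> {x\<in>{g1,g2}. edge_col F fc x = D} = {g2}"
      by auto
    then show "card {g\<in>?fD. v \<in> ends g} = 1" unfolding eq by auto
  qed simp
  moreover have "(\<Sum>g\<in>?fD. card {v\<in>verts_of ends f. v \<in> ends g}) = (\<Sum>g\<in>?fD. 2)"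
  proof (rule sum.cong)
    fix g assume g: "g \<in> ?fD"
    have "{v\<in>verts_of ends f. v \<in> ends g} = ends g" using g unfolding verts_of_def by blast
    then show "card {v\<in>verts_of ends f. v \<in> ends g} = 2" using card_ends g face_sub[OF f] by auto
  qed simp
  ultimately have "card (verts_of ends f) = 2 * card ?fD" by simp
  then show ?thesis using face_verts[OF f] by simp
qed

end


context lat888
begin

lemma del_card:
  assumes e: "e\<in>E" "ends e = {u,w}" and S: "S\<in>F" "e\<in>S"
  shows "card {g\<in>S. edge_col F fc g \<noteq> edge_col F fc e \<and> u\<notin>ends g \<and> w\<notin>ends g} = 2"
proof -
  define D where "D = edge_col F fc e"
  have uw: "u \<noteq> w" using card_ends[OF e(1)] e(2) by (cases "u = w") auto
  have DS: "D \<noteq> fc S" unfolding D_def using col_ne[OF e(1) S] .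
  have finS: "finite S" using face_cyc[OF S(1)] unfolding is_cycle_def by simp
  define NonD where "NonD = {g\<in>S. edge_col F fc g \<noteq> D}"
  have cN: "card NonD = 4" unfolding NonD_def
    using card_compl[OF finS, of "\<lambda>g. edge_col F fc g = D"] col_count[OF S(1) DS] card8[OF S(1)] by simp
  have ue: "u \<in> ends e" "w \<in> ends e" using e(2) by auto
  obtain a where a: "a \<noteq> e" "inc_edges S ends u = {e,a}"
    using card2_other[OF face_deg[OF S(1) S(2) ue(1)], of e] S ue by (auto simp: inc_iff)
  obtain b where b: "b \<noteq> e" "inc_edges S ends w = {e,b}"
    using card2_other[OF face_deg[OF S(1) S(2) ue(2)], of e] S ue by (auto simp: inc_iff)
  have am: "a \<in> S" "u \<in> ends a" using a(2) unfolding inc_edges_def by blast+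
  have bm: "b \<in> S" "w \<in> ends b" using b(2) unfolding inc_edges_def by blast+
  have ca: "edge_col F fc a \<noteq> D" unfolding D_def using alt[OF S(1) S(2) am(1) a(1)[symmetric] ue(1) am(2)] by simp
  have cb: "edge_col F fc b \<noteq> D" unfolding D_def using alt[OF S(1) S(2) bm(1) b(1)[symmetric] ue(2) bm(2)] by simp
  have ab: "a \<noteq> b"
  proof
    assume "a = b"
    then have "u \<in> ends a" "w \<in> ends a" using am bm by auto
    then have "ends a = {u,w}" using card2_eq[OF card_ends, of a u w] face_sub[OF S(1)] am uw by auto
    then have "a = e" using simple[of a e] face_sub[OF S(1)] am e by auto
    then show False using a by simp
  qed
  have T: "{g\<in>NonD. u\<in>ends g \<or> w\<in>ends g} = {a,b}"
  proof
    show "{g\<in>NonD. u\<in>ends g \<or> w\<in>ends g} \<subseteq> {a,b}"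
    proof
      fix g assume g: "g \<in> {g\<in>NonD. u\<in>ends g \<or> w\<in>ends g}"
      then have gS: "g \<in> S" "edge_col F fc g \<noteq> D" unfolding NonD_def by auto
      have ge: "g \<noteq> e" using gS unfolding D_def by auto
      show "g \<in> {a,b}"
      proof (cases "u \<in> ends g")
        case True
        then have "g \<in> inc_edges S ends u" using gS by (simp add: inc_iff)
        then show ?thesis using a ge by simp
      next
        case False
        then have "w \<in> ends g" using g by simp
        then have "g \<in> inc_edges S ends w" using gS by (simp add: inc_iff)
        then show ?thesis using b ge by simp
      qed
    qed
    show "{a,b} \<subseteq> {g\<in>NonD. u\<in>ends g \<or> w\<in>ends g}"
      using am bm ca cb unfolding NonD_def by auto
  qed
  have eq: "{g\<in>S. edge_col F fc g \<noteq> edge_col F fc e \<and> u\<notin>ends g \<and> w\<notin>ends g} = NonD - {g\<in>NonD. u\<in>ends g \<or> w\<in>ends g}"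
    unfolding NonD_def D_def by auto
  have finN: "finite NonD" unfolding NonD_def using finS by simp
  have sub: "{a,b} \<subseteq> NonD" using T by auto
  have "card (NonD - {a,b}) = card NonD - card {a,b}" using card_Diff_subset[OF _ sub] by simp
  then show ?thesis unfolding eq T using cN ab by simp
qed

end


context lat888
begin

lemma part1:
  assumes e: "e \<in> E" "ends e = {u,w}"
  shows "Lcount (adj E ends) (adj (sp_edges F fc ends u w e) (sp_ends ends)) = 9"
proof -
  define D where "D = edge_col F fc e"
  define SP where "SP = sp_edges F fc ends u w e"
  have uw: "u \<noteq> w" using card_ends[OF e(1)] e(2) by (cases "u = w") auto
  obtain S1 S2 where S12: "{f\<in>F. e\<in>f} = {S1,S2}" using faces_of[OF e(1)] by metis
  have Sch: "S1 \<noteq> S2 \<and> fc S1 \<noteq> fc S2 \<and> D \<noteq> fc S1 \<and> D \<noteq> fc S2"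
    using edge_col_char[OF e(1) S12] unfolding D_def by auto
  have "S1 \<in> {f\<in>F. e\<in>f}" "S2 \<in> {f\<in>F. e\<in>f}" unfolding S12 by simp_all
  then have S1: "S1\<in>F" "e\<in>S1" and S2: "S2\<in>F" "e\<in>S2" by simp_all
  have shr: "sp_shrink F e = {S1,S2}" unfolding sp_shrink_def using S12 .
  have mer: "M \<in> sp_merge F fc e \<longleftrightarrow> M\<in>F \<and> fc M = D \<and> (M\<inter>S1 \<noteq> {} \<or> M\<inter>S2 \<noteq> {})" for M
    unfolding sp_merge_def shr D_def by auto
  have new: "(S,g) \<in> sp_new F fc ends u w e \<longleftrightarrow> (S = S1 \<or> S = S2) \<and> g\<in>S \<and> edge_col F fc g = D \<and> u\<notin>ends g \<and> w\<notin>ends g" for S g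
    unfolding sp_new_def shr D_def by auto
  have surv: "Inl g \<in> SP \<longleftrightarrow> u\<notin>ends g \<and> w\<notin>ends g \<and> \<not>((g\<in>S1 \<or> g\<in>S2) \<and> edge_col F fc g \<noteq> D)"
    if g: "g\<in>E" for g
  proof
    assume a: "Inl g \<in> SP"
    then have nt: "u\<notin>ends g" "w\<notin>ends g" unfolding SP_def sp_edges_iff by (auto simp: sp_ends_def)
    from a have "\<exists>f\<in>sp_faces F fc ends u w e. Inl g \<in> f" unfolding SP_def sp_edges_iff by (elim conjE)
    then have fa: "(\<exists>f\<in>F. f \<notin> sp_shrink F e \<and> f \<notin> sp_merge F fc e \<and> g\<in>f) \<or> (\<exists>S. (S,g) \<in> sp_new F fc ends u w e)
       \<or> ((\<exists>M\<in>sp_merge F fc e. g\<in>M) \<and> (\<forall>S\<in>sp_shrink F e. g\<notin>S))" by (simp only: Inl_faces)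
    have "\<not>((g\<in>S1 \<or> g\<in>S2) \<and> edge_col F fc g \<noteq> D)"
    proof
      assume b: "(g\<in>S1 \<or> g\<in>S2) \<and> edge_col F fc g \<noteq> D"
      then obtain S where S: "S = S1 \<or> S = S2" "g \<in> S" by blast
      have SF: "S\<in>F" "e\<in>S" and SD: "D \<noteq> fc S" using S S1 S2 Sch by auto
      from fa show False
      proof (elim disjE)
        assume "\<exists>f\<in>F. f \<notin> sp_shrink F e \<and> f \<notin> sp_merge F fc e \<and> g\<in>f"
        then obtain f where f: "f\<in>F" "f \<notin> sp_shrink F e" "f \<notin> sp_merge F fc e" "g \<in> f" by blast
        have fS: "f \<noteq> S" using f(2) S shr by auto
        have gf: "{h\<in>F. g\<in>h} = {S,f}" using card2_eq[OF two_faces[OF g], of S f] SF S f fS by auto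
        note ch = edge_col_char[OF g gf]
        have "D = fc f" using colour3[of "fc S" "edge_col F fc g" "fc f" D] ch SD b by auto
        then have "f \<in> sp_merge F fc e" unfolding mer using f S by auto
        then show False using f(3) by simp
      next
        assume "\<exists>S. (S,g) \<in> sp_new F fc ends u w e" then show False using b new by auto
      next
        assume "(\<exists>M\<in>sp_merge F fc e. g\<in>M) \<and> (\<forall>S\<in>sp_shrink F e. g\<notin>S)" then show False using S shr by auto
      qed
    qed
    then show "u\<notin>ends g \<and> w\<notin>ends g \<and> \<not>((g\<in>S1 \<or> g\<in>S2) \<and> edge_col F fc g \<noteq> D)" using nt by simp
  next
    assume a: "u\<notin>ends g \<and> w\<notin>ends g \<and> \<not>((g\<in>S1 \<or> g\<in>S2) \<and> edge_col F fc g \<noteq> D)"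
    have fa: "(\<exists>f\<in>F. f \<notin> sp_shrink F e \<and> f \<notin> sp_merge F fc e \<and> g\<in>f) \<or> (\<exists>S. (S,g) \<in> sp_new F fc ends u w e)
       \<or> ((\<exists>M\<in>sp_merge F fc e. g\<in>M) \<and> (\<forall>S\<in>sp_shrink F e. g\<notin>S))"
    proof (cases "g\<in>S1 \<or> g\<in>S2")
      case True
      then obtain S where S: "S = S1 \<or> S = S2" "g\<in>S" by blast
      have "(S,g) \<in> sp_new F fc ends u w e" unfolding new using S a True by auto
      then show ?thesis by blast
    next
      case False
      obtain A B where AB: "{h\<in>F. g\<in>h} = {A,B}" using faces_of[OF g] by metis
      have "A \<in> {h\<in>F. g\<in>h}" unfolding AB by simp
      then have A: "A \<in> F" "g\<in>A" by simp_all
      have Ash: "A \<notin> sp_shrink F e" using shr A False by auto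
      show ?thesis
      proof (cases "A \<in> sp_merge F fc e")
        case True then show ?thesis using False A shr by auto
      next
        case False then show ?thesis using A Ash by blast
      qed
    qed
    have "\<exists>f\<in>sp_faces F fc ends u w e. Inl g \<in> f" using fa by (simp only: Inl_faces)
    then show "Inl g \<in> SP" unfolding SP_def sp_edges_iff using a by (auto simp: sp_ends_def)
  qed
  have InlE: "g \<in> E" if "Inl g \<in> SP" for g
  proof -
    from that have "\<exists>f\<in>sp_faces F fc ends u w e. Inl g \<in> f" unfolding SP_def sp_edges_iff by (elim conjE)
    then have fa: "(\<exists>f\<in>F. f \<notin> sp_shrink F e \<and> f \<notin> sp_merge F fc e \<and> g\<in>f) \<or> (\<exists>S. (S,g) \<in> sp_new F fc ends u w e)
       \<or> ((\<exists>M\<in>sp_merge F fc e. g\<in>M) \<and> (\<forall>S\<in>sp_shrink F e. g\<notin>S))" by (simp only: Inl_faces)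
    then show ?thesis
    proof (elim disjE)
      assume "\<exists>f\<in>F. f \<notin> sp_shrink F e \<and> f \<notin> sp_merge F fc e \<and> g\<in>f"
      then show ?thesis using face_sub by blast
    next
      assume "\<exists>S. (S,g) \<in> sp_new F fc ends u w e"
      then obtain S where "(S,g) \<in> sp_new F fc ends u w e" by blast
      then have "(S = S1 \<or> S = S2) \<and> g\<in>S" by (simp add: new)
      then show ?thesis using face_sub S1 S2 by auto
    next
      assume "(\<exists>M\<in>sp_merge F fc e. g\<in>M) \<and> (\<forall>S\<in>sp_shrink F e. g\<notin>S)"
      then obtain M where "M \<in> sp_merge F fc e" "g \<in> M" by blast
      then have "M \<in> F" "g \<in> M" by (simp_all add: mer)
      then show ?thesis using face_sub by auto
    qed
  qed
  define Lost where "Lost = {g\<in>E. Inl g \<notin> SP}"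
  have inj: "inj_on ends E" by (rule inj_onI) (rule simple)
  have pairs: "{{x, y} | x y. adj E ends x y \<and> \<not> adj SP (sp_ends ends) x y} = ends ` Lost"
  proof
    show "{{x, y} | x y. adj E ends x y \<and> \<not> adj SP (sp_ends ends) x y} \<subseteq> ends ` Lost"
    proof
      fix P assume "P \<in> {{x, y} | x y. adj E ends x y \<and> \<not> adj SP (sp_ends ends) x y}"
      then obtain x y where P: "P = {x,y}" "adj E ends x y" "\<not> adj SP (sp_ends ends) x y" by blast
      then obtain g where g: "g\<in>E" "ends g = {x,y}" unfolding adj_def by blast
      have "Inl g \<notin> SP"
      proof
        assume "Inl g \<in> SP"
        moreover have "sp_ends ends (Inl g) = {x,y}" using g by (simp add: sp_ends_def)
        ultimately have "adj SP (sp_ends ends) x y" unfolding adj_def by blast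
        then show False using P by simp
      qed
      then show "P \<in> ends ` Lost" using g P unfolding Lost_def by auto
    qed
    show "ends ` Lost \<subseteq> {{x, y} | x y. adj E ends x y \<and> \<not> adj SP (sp_ends ends) x y}"
    proof
      fix P assume "P \<in> ends ` Lost"
      then obtain g where g: "g\<in>E" "Inl g \<notin> SP" "P = ends g" unfolding Lost_def by blast
      obtain x y where xy: "ends g = {x,y}" using ends2[OF g(1)] by blast
      have "\<not> adj SP (sp_ends ends) x y"
      proof
        assume "adj SP (sp_ends ends) x y"
        then obtain z where z: "z\<in>SP" "sp_ends ends z = {x,y}" unfolding adj_def by blast
        show False
        proof (cases z)
          case (Inl g')
          then have "g' \<in> E" using z InlE by simp
          moreover have "ends g' = ends g" using z Inl xy by (simp add: sp_ends_def)
          ultimately have "g' = g" using simple g(1) by blast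
          then show False using z Inl g(2) by simp
        next
          case (Inr p)
          obtain S f where p: "p = (S,f)" by (cases p)
          have zf: "\<exists>f\<in>sp_faces F fc ends u w e. z \<in> f" "sp_ends ends z \<inter> {u,w} = {}"
            using z(1) unfolding SP_def sp_edges_iff by auto
          have pn: "(S,f) \<in> sp_new F fc ends u w e" using Inr_faces zf(1) Inr p by simp
          have fS: "Inl f \<in> SP" unfolding SP_def sp_edges_iff
          proof
            show "\<exists>F'\<in>sp_faces F fc ends u w e. Inl f \<in> F'" using new_pair[OF pn] by blast
            show "sp_ends ends (Inl f) \<inter> {u,w} = {}" using zf(2) Inr p by (simp add: sp_ends_def)
          qed
          then have fE: "f \<in> E" by (rule InlE)
          have "ends f = ends g" using z(2) Inr p xy by (simp add: sp_ends_def)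
          then have "f = g" using simple fE g(1) by blast
          then show False using fS g(2) by simp
        qed
      qed
      moreover have "adj E ends x y" using g xy unfolding adj_def by blast
      ultimately show "P \<in> {{x, y} | x y. adj E ends x y \<and> \<not> adj SP (sp_ends ends) x y}" using g(3) xy by blast
    qed
  qed
  have cardL: "Lcount (adj E ends) (adj SP (sp_ends ends)) = card Lost"
  proof -
    have "inj_on ends Lost" by (rule inj_on_subset[OF inj]) (auto simp: Lost_def)
    then show ?thesis unfolding Lcount_def pairs by (rule card_image)
  qed
  define T where "T = inc_edges E ends u \<union> inc_edges E ends w"
  define Del where "Del S = {g\<in>S. edge_col F fc g \<noteq> D \<and> u\<notin>ends g \<and> w\<notin>ends g}" for S
  have LostEq: "Lost = T \<union> Del S1 \<union> Del S2"
  proof (rule set_eqI)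
    fix g
    show "g \<in> Lost \<longleftrightarrow> g \<in> T \<union> Del S1 \<union> Del S2"
    proof (cases "g\<in>E")
      case True
      show ?thesis unfolding Lost_def T_def Del_def using surv[OF True] True by (auto simp: inc_iff)
    next
      case False
      then show ?thesis unfolding Lost_def T_def Del_def using face_sub S1 S2 by (auto simp: inc_iff)
    qed
  qed
  have uV: "u\<in>V" "w\<in>V" using ends_sub[OF e(1)] e(2) by auto
  have inter: "inc_edges E ends u \<inter> inc_edges E ends w = {e}"
  proof
    show "inc_edges E ends u \<inter> inc_edges E ends w \<subseteq> {e}"
    proof
      fix g assume "g \<in> inc_edges E ends u \<inter> inc_edges E ends w"
      then have g: "g\<in>E" "u\<in>ends g" "w\<in>ends g" by (auto simp: inc_iff)
      then have "ends g = {u,w}" using card2_eq[OF card_ends[OF g(1)]] uw by blast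
      then show "g \<in> {e}" using simple g(1) e by auto
    qed
    show "{e} \<subseteq> inc_edges E ends u \<inter> inc_edges E ends w" using e by (auto simp: inc_iff)
  qed
  have finI: "finite (inc_edges E ends v)" for v using finE unfolding inc_edges_def by simp
  have cT: "card T = 5"
    using card_Un_Int[OF finI finI, of u w] triv[OF uV(1)] triv[OF uV(2)] inter unfolding T_def by simp
  have cD1: "card (Del S1) = 2" unfolding Del_def D_def using del_card[OF e S1] .
  have cD2: "card (Del S2) = 2" unfolding Del_def D_def using del_card[OF e S2] .
  have disj12: "Del S1 \<inter> Del S2 = {}"
  proof (rule ccontr)
    assume "Del S1 \<inter> Del S2 \<noteq> {}"
    then obtain g where g: "g \<in> S1" "g \<in> S2" "edge_col F fc g \<noteq> D" unfolding Del_def by blast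
    have gE: "g\<in>E" using g face_sub S1 by blast
    have gf: "{h\<in>F. g\<in>h} = {S1,S2}" using card2_eq[OF two_faces[OF gE], of S1 S2] S1 S2 g Sch by auto
    note ch = edge_col_char[OF gE gf]
    have "edge_col F fc g = D" using colour3[of "fc S1" "fc S2" D "edge_col F fc g"] ch Sch by auto
    then show False using g by simp
  qed
  have disjT: "T \<inter> (Del S1 \<union> Del S2) = {}" unfolding T_def Del_def by (auto simp: inc_iff)
  have finT: "finite T" unfolding T_def using finI by simp
  have finD: "finite (Del S)" if "S\<in>F" for S unfolding Del_def using face_cyc[OF that] unfolding is_cycle_def by simp
  have "card (Del S1 \<union> Del S2) = 4" using card_Un_disjoint[OF finD[OF S1(1)] finD[OF S2(1)] disj12] cD1 cD2 by simp
  then have "card (T \<union> (Del S1 \<union> Del S2)) = 9"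
    using card_Un_disjoint[OF finT _ disjT] finD S1 S2 cT by simp
  then have "card Lost = 9" unfolding LostEq by (simp add: Un_assoc)
  then show ?thesis using cardL unfolding SP_def by simp
qed

end


context lat888
begin

lemma two_edges_one_face:
  assumes ab: "a\<in>E" "b\<in>E" "a\<noteq>b" "v\<in>ends a" "v\<in>ends b"
    and f: "f\<in>F" "a\<in>f" "b\<in>f" and f': "f'\<in>F" "a\<in>f'" "b\<in>f'"
  shows "f = f'"
proof -
  have vV: "v\<in>V" using ends_sub ab by auto
  have gi: "a \<in> inc_edges E ends v" "b \<in> inc_edges E ends v" using ab by (simp_all add: inc_iff)
  obtain k where k: "k\<noteq>a" "k\<noteq>b" "inc_edges E ends v = {a,b,k}"
    using inc3[OF vV gi ab(3)] by metis
  from local_faces[OF k(3) ab(3) k(1)[symmetric] k(2)[symmetric]]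
  obtain f1 f2 f3 where ff: "f1\<in>F" "f2\<in>F" "f3\<in>F" "{f\<in>F. a\<in>f} = {f1,f2}" "{f\<in>F. b\<in>f} = {f1,f3}"
     "{f\<in>F. k\<in>f} = {f2,f3}" "a\<in>f1" "b\<in>f1" "k\<notin>f1" "a\<in>f2" "k\<in>f2" "b\<notin>f2" "b\<in>f3" "k\<in>f3" "a\<notin>f3"
    by (elim exE conjE)
  have "f \<in> {f\<in>F. a\<in>f}" using f by simp
  then have "f = f1 \<or> f = f2" unfolding ff(4) by simp
  then have 1: "f = f1" using f ff(12) by auto
  have "f' \<in> {f\<in>F. a\<in>f}" using f' by simp
  then have "f' = f1 \<or> f' = f2" unfolding ff(4) by simp
  then have 2: "f' = f1" using f' ff(12) by auto
  show ?thesis using 1 2 by simp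
qed

lemma faces_at_v:
  assumes v: "v\<in>V"
  shows "card {f\<in>F. v \<in> verts_of ends f} \<le> 3"
proof -
  obtain g h k where ghk: "inc_edges E ends v = {g,h,k}" "g\<noteq>h" "h\<noteq>k" "g\<noteq>k"
    using triv[OF v] unfolding card_3_iff by metis
  from local_faces[OF ghk(1) ghk(2) ghk(4) ghk(3)]
  obtain f1 f2 f3 where ff: "f1\<in>F" "f2\<in>F" "f3\<in>F" "{f\<in>F. g\<in>f} = {f1,f2}" "{f\<in>F. h\<in>f} = {f1,f3}"
     "{f\<in>F. k\<in>f} = {f2,f3}"
    by (elim exE conjE)
  have "{f\<in>F. v \<in> verts_of ends f} \<subseteq> {f1,f2,f3}"
  proof
    fix f assume "f \<in> {f\<in>F. v \<in> verts_of ends f}"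
    then have f: "f\<in>F" "v \<in> verts_of ends f" by auto
    then obtain x where x: "x\<in>f" "v\<in>ends x" unfolding verts_of_def by blast
    then have "x \<in> inc_edges E ends v" using face_sub f(1) by (auto simp: inc_iff)
    then have "x = g \<or> x = h \<or> x = k" unfolding ghk(1) by simp
    then show "f \<in> {f1,f2,f3}"
    proof (elim disjE)
      assume "x = g" then have "f \<in> {f\<in>F. g\<in>f}" using f x by simp
      then show ?thesis unfolding ff(4) by auto
    next
      assume "x = h" then have "f \<in> {f\<in>F. h\<in>f}" using f x by simp
      then show ?thesis unfolding ff(5) by auto
    next
      assume "x = k" then have "f \<in> {f\<in>F. k\<in>f}" using f x by simp
      then show ?thesis unfolding ff(6) by auto
    qed
  qed
  then have "card {f\<in>F. v \<in> verts_of ends f} \<le> card {f1,f2,f3}" by (intro card_mono) auto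
  also have "\<dots> \<le> 3" using card_length[of "[f1,f2,f3]"] by simp
  finally show ?thesis .
qed

lemma girth:
  assumes long: "long_noncontractible E ends F" and C: "C \<subseteq> E" "is_cycle ends C"
  shows "8 \<le> card C"
proof (cases "contractible ends F C")
  case False
  have "card C > 8" using long C(1) C(2) False unfolding long_noncontractible_def by blast
  then show ?thesis by simp
next
  case True
  then obtain S where S: "S \<subseteq> F" "{g. odd (card {f\<in>S. g\<in>f})} = C"
      "euler_char (verts_of ends (\<Union>S)) (\<Union>S) S = 1"
    unfolding contractible_def by blast
  define U where "U = \<Union>S"
  define VU where "VU = verts_of ends U"
  define deg where "deg v = card (inc_edges U ends v)" for v
  define k where "k v = card {f\<in>S. v \<in> verts_of ends f}" for v
  have finS: "finite S" using S(1) finF finite_subset by blast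
  have UE: "U \<subseteq> E" unfolding U_def using S(1) face_sub by blast
  have finU: "finite U" using UE finE finite_subset by blast
  have finVU: "finite VU" unfolding VU_def verts_of_def using finU UE fin_ends by blast
  have chi: "int (card VU) - int (card U) + int (card S) = 1"
    using S(3) unfolding euler_char_def VU_def U_def .
  have a: "(\<Sum>v\<in>VU. deg v) = 2 * card U"
  proof -
    have "(\<Sum>v\<in>VU. card {g\<in>U. v \<in> ends g}) = (\<Sum>g\<in>U. card {v\<in>VU. v \<in> ends g})"
      by (rule double_count[OF finVU finU])
    also have "\<dots> = (\<Sum>g\<in>U. 2)"
    proof (rule sum.cong)
      fix g assume g: "g \<in> U"
      have "{v\<in>VU. v \<in> ends g} = ends g" using g unfolding VU_def verts_of_def by blast
      then show "card {v\<in>VU. v \<in> ends g} = 2" using card_ends g UE by auto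
    qed simp
    finally show ?thesis unfolding deg_def inc_edges_def by simp
  qed
  have b: "(\<Sum>v\<in>VU. k v) = 8 * card S"
  proof -
    have "(\<Sum>v\<in>VU. card {f\<in>S. v \<in> verts_of ends f}) = (\<Sum>f\<in>S. card {v\<in>VU. v \<in> verts_of ends f})"
      by (rule double_count[OF finVU finS])
    also have "\<dots> = (\<Sum>f\<in>S. 8)"
    proof (rule sum.cong)
      fix f assume f: "f \<in> S"
      have "{v\<in>VU. v \<in> verts_of ends f} = verts_of ends f" using f unfolding VU_def U_def verts_of_def by blast
      then show "card {v\<in>VU. v \<in> verts_of ends f} = 8" using face_verts f S(1) by auto
    qed simp
    finally show ?thesis unfolding k_def by simp
  qed
  have c: "8 - 4 * int (deg v) + int (k v) \<le> (if v \<in> verts_of ends C then 1 else 0)" if v: "v \<in> VU" for v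
  proof -
    obtain g where g: "g\<in>U" "v\<in>ends g" using v unfolding VU_def verts_of_def by blast
    then obtain f0 where f0: "f0\<in>S" "g\<in>f0" unfolding U_def by blast
    have f0F: "f0 \<in> F" using f0 S(1) by blast
    have gE: "g \<in> E" using g UE by blast
    have vV: "v \<in> V" using ends_sub gE g by blast
    have finIU: "finite (inc_edges U ends v)" using finU unfolding inc_edges_def by simp
    have "inc_edges U ends v \<subseteq> inc_edges E ends v" using UE unfolding inc_edges_def by blast
    moreover have finIE: "finite (inc_edges E ends v)" using finE unfolding inc_edges_def by simp
    ultimately have d3: "deg v \<le> 3" unfolding deg_def using triv[OF vV] card_mono by metis
    have sub0: "inc_edges f0 ends v \<subseteq> inc_edges U ends v" using f0 unfolding U_def inc_edges_def by blast
    have c0: "card (inc_edges f0 ends v) = 2" using face_deg[OF f0F f0(2) g(2)] .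
    have d2: "2 \<le> deg v" unfolding deg_def using card_mono[OF finIU sub0] c0 by simp
    have k3: "k v \<le> 3"
    proof -
      have "{f\<in>S. v \<in> verts_of ends f} \<subseteq> {f\<in>F. v \<in> verts_of ends f}" using S(1) by blast
      moreover have "finite {f\<in>F. v \<in> verts_of ends f}" using finF by simp
      ultimately have "k v \<le> card {f\<in>F. v \<in> verts_of ends f}" unfolding k_def by (rule card_mono[rotated])
      then show ?thesis using faces_at_v[OF vV] by simp
    qed
    show ?thesis
    proof (cases "deg v = 2")
      case False
      then have "deg v = 3" using d2 d3 by simp
      then show ?thesis using k3 by simp
    next
      case True
      have eqI: "inc_edges U ends v = inc_edges f0 ends v"
        using card_subset_eq[OF finIU sub0] c0 True unfolding deg_def by simp
      obtain a b where ab: "a \<noteq> b" "inc_edges f0 ends v = {a,b}" using card2E[OF c0] by metis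
      have abm: "a\<in>f0" "b\<in>f0" "v\<in>ends a" "v\<in>ends b" using ab(2) unfolding inc_edges_def by blast+
      have abE: "a\<in>E" "b\<in>E" using abm f0F face_sub by blast+
      have onlyf0: "f = f0" if f: "f\<in>S" "v \<in> verts_of ends f" for f
      proof -
        have fF: "f\<in>F" using f S(1) by blast
        obtain x where x: "x\<in>f" "v\<in>ends x" using f unfolding verts_of_def by blast
        have cf: "card (inc_edges f ends v) = 2" using face_deg[OF fF x] .
        have "inc_edges f ends v \<subseteq> inc_edges U ends v" using f unfolding U_def inc_edges_def by blast
        then have "inc_edges f ends v \<subseteq> {a,b}" using eqI ab by simp
        then have "inc_edges f ends v = {a,b}"
          using card_subset_eq[of "{a,b}" "inc_edges f ends v"] cf ab(1) by simp
        then have "a\<in>f" "b\<in>f" unfolding inc_edges_def by blast+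
        then show ?thesis using two_edges_one_face[OF abE ab(1) abm(3,4) fF _ _ f0F abm(1,2)] by simp
      qed
      have "{f\<in>S. v \<in> verts_of ends f} \<subseteq> {f0}" using onlyf0 by blast
      then have k1: "k v \<le> 1" unfolding k_def using card_mono[of "{f0}"] by fastforce
      have "{f\<in>S. a\<in>f} = {f0}"
      proof
        show "{f\<in>S. a\<in>f} \<subseteq> {f0}"
        proof
          fix f assume "f \<in> {f\<in>S. a\<in>f}"
          then have "f\<in>S" "v \<in> verts_of ends f" using abm unfolding verts_of_def by auto
          then show "f \<in> {f0}" using onlyf0 by simp
        qed
        show "{f0} \<subseteq> {f\<in>S. a\<in>f}" using f0 abm by simp
      qed
      then have "a \<in> {g. odd (card {f\<in>S. g\<in>f})}" by simp
      then have "a \<in> C" unfolding S(2) .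
      then have "v \<in> verts_of ends C" using abm unfolding verts_of_def by blast
      then show ?thesis using True k1 by simp
    qed
  qed
  have "(\<Sum>v\<in>VU. (8 - 4 * int (deg v) + int (k v))) = 8 * int (card VU) - 4 * int (\<Sum>v\<in>VU. deg v) + int (\<Sum>v\<in>VU. k v)"
    by (simp add: sum.distrib sum_subtractf sum_distrib_left of_nat_sum)
  also have "\<dots> = 8" using a b chi by simp
  finally have s8: "(\<Sum>v\<in>VU. (8 - 4 * int (deg v) + int (k v))) = 8" .
  have "(\<Sum>v\<in>VU. (8 - 4 * int (deg v) + int (k v))) \<le> (\<Sum>v\<in>VU. (if v \<in> verts_of ends C then 1 else 0))"
    by (rule sum_mono) (rule c)
  also have "\<dots> = int (card {v\<in>VU. v \<in> verts_of ends C})"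
    using sum.inter_filter[OF finVU, of "\<lambda>_. (1::int)" "\<lambda>v. v \<in> verts_of ends C"] by simp
  finally have "8 \<le> card {v\<in>VU. v \<in> verts_of ends C}" using s8 by simp
  also have "\<dots> \<le> card (verts_of ends C)"
  proof (rule card_mono)
    show "finite (verts_of ends C)" unfolding verts_of_def using C fin_ends is_cycle_def by blast
  qed blast
  also have "\<dots> = card C" using cyc_verts_card[OF C(2) C(1)] .
  finally show ?thesis .
qed

end


lemma mod_lt: "i < n \<Longrightarrow> Suc i mod n = (if Suc i = n then 0 else Suc i)"
  by (cases "Suc i = n") auto

context lat888
begin

lemma adj_sym: "adj E ends x y \<Longrightarrow> adj E ends y x"
  unfolding adj_def by (auto simp: insert_commute)

lemma adj_ne: "adj E ends x y \<Longrightarrow> x \<noteq> y"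
  unfolding adj_def using card_ends by fastforce

lemma adj_V: "adj E ends x y \<Longrightarrow> x \<in> V \<and> y \<in> V"
  unfolding adj_def using ends_sub by blast

lemma no_short:
  assumes long: "long_noncontractible E ends F" and n: "3 \<le> n" "n < 8" and inj: "inj_on v {..<n}"
    and ad: "\<forall>i<n. adj E ends (v i) (v (Suc i mod n))"
  shows False
proof -
  define c where "c i = (SOME g. g\<in>E \<and> ends g = {v i, v (Suc i mod n)})" for i
  have c: "c i \<in> E \<and> ends (c i) = {v i, v (Suc i mod n)}" if "i < n" for i
  proof -
    have "\<exists>g. g\<in>E \<and> ends g = {v i, v (Suc i mod n)}" using ad that unfolding adj_def by blast
    then show ?thesis unfolding c_def by (rule someI_ex)
  qed
  have vinj: "v a = v b \<longleftrightarrow> a = b" if "a < n" "b < n" for a b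
    using inj that unfolding inj_on_def by blast
  have nxt: "Suc i mod n < n" for i using n by simp
  have arith: False if "i < n" "j < n" "i = Suc j mod n" "j = Suc i mod n" for i j
  proof -
    have a: "Suc i mod n = (if Suc i = n then 0 else Suc i)" using mod_lt that(1) .
    have b: "Suc j mod n = (if Suc j = n then 0 else Suc j)" using mod_lt that(2) .
    show False
    proof (cases "Suc j = n")
      case True then have "i = 0" using that(3) b by simp
      then have "j = Suc 0 mod n" using that(4) by simp
      then have "j = 1" using n by simp
      then show False using True n by simp
    next
      case False then have i: "i = Suc j" using that(3) b by simp
      show False
      proof (cases "Suc i = n")
        case True then have "j = 0" using that(4) a by simp
        then show False using True i n by simp
      next
        case False then have "j = Suc i" using that(4) a by simp
        then show False using i by simp
      qed
    qed
  qed
  have cinj: "inj_on c {..<n}"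
  proof (rule inj_onI)
    fix i j assume ij: "i \<in> {..<n}" "j \<in> {..<n}" "c i = c j"
    then have "{v i, v (Suc i mod n)} = {v j, v (Suc j mod n)}" using c by (metis lessThan_iff)
    then have "(v i = v j \<and> v (Suc i mod n) = v (Suc j mod n)) \<or> (v i = v (Suc j mod n) \<and> v (Suc i mod n) = v j)"
      by (simp add: doubleton_eq_iff)
    then show "i = j"
    proof
      assume "v i = v j \<and> v (Suc i mod n) = v (Suc j mod n)"
      then show ?thesis using vinj[of i j] ij by auto
    next
      assume h: "v i = v (Suc j mod n) \<and> v (Suc i mod n) = v j"
      have il: "i < n" "j < n" using ij by auto
      have "i = Suc j mod n" using h vinj[OF il(1) nxt[of j]] by simp
      moreover have "j = Suc i mod n" using h vinj[OF nxt[of i] il(2)] by simp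
      ultimately show ?thesis using arith[OF il] by blast
    qed
  qed
  define C where "C = c ` {..<n}"
  have CE: "C \<subseteq> E" unfolding C_def using c by auto
  have cardC: "card C = n" unfolding C_def using card_image[OF cinj] by simp
  define prv where "prv j = (if j = 0 then n - 1 else j - 1)" for j
  have prv_lt: "prv j < n" if "j < n" for j using that n unfolding prv_def by auto
  have vin: "v j \<in> ends (c i) \<longleftrightarrow> i = j \<or> i = prv j" if "i < n" "j < n" for i j
  proof -
    have "v j \<in> ends (c i) \<longleftrightarrow> v j = v i \<or> v j = v (Suc i mod n)" using c[OF that(1)] by auto
    also have "\<dots> \<longleftrightarrow> j = i \<or> j = Suc i mod n" using vinj[OF that(2) that(1)] vinj[OF that(2) nxt[of i]] by simp
    also have "\<dots> \<longleftrightarrow> i = j \<or> i = prv j" using that n mod_lt[of i n] unfolding prv_def by auto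
    finally show ?thesis .
  qed
  have verts: "verts_of ends C = v ` {..<n}"
  proof
    show "verts_of ends C \<subseteq> v ` {..<n}"
    proof
      fix x assume "x \<in> verts_of ends C"
      then obtain i where i: "i < n" "x \<in> ends (c i)" unfolding verts_of_def C_def by blast
      then have "x = v i \<or> x = v (Suc i mod n)" using c[OF i(1)] by simp
      then show "x \<in> v ` {..<n}" using i(1) nxt[of i] by blast
    qed
    show "v ` {..<n} \<subseteq> verts_of ends C"
    proof
      fix x assume "x \<in> v ` {..<n}"
      then obtain j where j: "j < n" "x = v j" by blast
      then have "x \<in> ends (c j)" using vin[OF j(1) j(1)] by simp
      then show "x \<in> verts_of ends C" unfolding verts_of_def C_def using j by blast
    qed
  qed
  have deg: "card (inc_edges C ends x) = 2" if "x \<in> verts_of ends C" for x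
  proof -
    have "x \<in> v ` {..<n}" using that unfolding verts .
    then obtain j where j: "j < n" "x = v j" by blast
    have "inc_edges C ends x = {c j, c (prv j)}"
    proof
      show "inc_edges C ends x \<subseteq> {c j, c (prv j)}"
      proof
        fix g assume "g \<in> inc_edges C ends x"
        then obtain i where i: "i < n" "g = c i" "x \<in> ends (c i)" unfolding inc_edges_def C_def by blast
        then have "i = j \<or> i = prv j" using vin j by simp
        then show "g \<in> {c j, c (prv j)}" using i by auto
      qed
      show "{c j, c (prv j)} \<subseteq> inc_edges C ends x"
        using vin j prv_lt unfolding inc_edges_def C_def by auto
    qed
    moreover have "c j \<noteq> c (prv j)"
    proof
      assume "c j = c (prv j)"
      then have "j = prv j" using cinj j prv_lt unfolding inj_on_def by blast
      then show False using j n unfolding prv_def by (auto split: if_splits)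
    qed
    ultimately show ?thesis by simp
  qed
  let ?R = "{(a, b). a \<in> C \<and> b \<in> C \<and> ends a \<inter> ends b \<noteq> {}}"
  have conn0: "(c 0, c i) \<in> ?R\<^sup>*" if "i < n" for i
    using that
  proof (induction i)
    case 0 then show ?case by simp
  next
    case (Suc i)
    then have i: "i < n" by simp
    have "v (Suc i) \<in> ends (c i)" using c[OF i] Suc.prems by simp
    moreover have "v (Suc i) \<in> ends (c (Suc i))" using c[OF Suc.prems] by simp
    ultimately have "(c i, c (Suc i)) \<in> ?R" unfolding C_def using i Suc.prems by blast
    with Suc.IH[OF i] show ?case by (rule rtrancl_into_rtrancl)
  qed
  have symR: "sym (?R\<^sup>*)" by (rule sym_rtrancl) (auto simp: sym_def)
  have conn: "edge_conn ends C" unfolding edge_conn_def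
  proof (intro ballI)
    fix g h assume gh: "g \<in> C" "h \<in> C"
    then obtain i j where ij: "i < n" "j < n" "g = c i" "h = c j" unfolding C_def by blast
    have "(g, c 0) \<in> ?R\<^sup>*" using conn0[OF ij(1)] symR ij unfolding sym_def by blast
    moreover have "(c 0, h) \<in> ?R\<^sup>*" using conn0[OF ij(2)] ij by simp
    ultimately show "(g, h) \<in> ?R\<^sup>*" by (rule rtrancl_trans)
  qed
  have finC: "finite C" unfolding C_def by simp
  have neC: "C \<noteq> {}" using cardC n by auto
  have cyc: "is_cycle ends C" unfolding is_cycle_def
    using finC neC deg conn by blast
  have "8 \<le> card C" by (rule girth[OF long CE cyc])
  then show False using cardC n by simp
qed

lemma no_short_list:
  assumes long: "long_noncontractible E ends F" and d: "distinct xs" "3 \<le> length xs" "length xs < 8"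
    and ad: "\<forall>i<length xs. adj E ends (xs!i) (xs!(Suc i mod length xs))"
  shows False
proof -
  have "inj_on (\<lambda>i. xs!i) {..<length xs}" using d(1) by (auto simp: inj_on_def nth_eq_iff_index_eq)
  then show False using no_short[OF long d(2,3) _ ad] by blast
qed

lemma no3:
  assumes long: "long_noncontractible E ends F" and d: "distinct [a,b,c]"
    and "adj E ends a b" "adj E ends b c" "adj E ends c a"
  shows False
proof (rule no_short_list[OF long d])
  show "\<forall>i<length [a,b,c]. adj E ends ([a,b,c]!i) ([a,b,c]!(Suc i mod length [a,b,c]))"
  proof (intro allI impI)
    fix i assume "i < length [a,b,c]"
    then have "i = 0 \<or> i = 1 \<or> i = 2" by auto
    then show "adj E ends ([a,b,c]!i) ([a,b,c]!(Suc i mod length [a,b,c]))" using assms by auto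
  qed
qed simp_all

lemma no4:
  assumes long: "long_noncontractible E ends F" and d: "distinct [a,b,c,d]"
    and "adj E ends a b" "adj E ends b c" "adj E ends c d" "adj E ends d a"
  shows False
proof (rule no_short_list[OF long d])
  show "\<forall>i<length [a,b,c,d]. adj E ends ([a,b,c,d]!i) ([a,b,c,d]!(Suc i mod length [a,b,c,d]))"
  proof (intro allI impI)
    fix i assume "i < length [a,b,c,d]"
    then have "i = 0 \<or> i = 1 \<or> i = 2 \<or> i = 3" by auto
    then show "adj E ends ([a,b,c,d]!i) ([a,b,c,d]!(Suc i mod length [a,b,c,d]))" using assms by auto
  qed
qed simp_all

lemma no5:
  assumes long: "long_noncontractible E ends F" and d: "distinct [a,b,c,d,e]"
    and "adj E ends a b" "adj E ends b c" "adj E ends c d" "adj E ends d e" "adj E ends e a"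
  shows False
proof (rule no_short_list[OF long d])
  show "\<forall>i<length [a,b,c,d,e]. adj E ends ([a,b,c,d,e]!i) ([a,b,c,d,e]!(Suc i mod length [a,b,c,d,e]))"
  proof (intro allI impI)
    fix i assume "i < length [a,b,c,d,e]"
    then have "i = 0 \<or> i = 1 \<or> i = 2 \<or> i = 3 \<or> i = 4" by auto
    then show "adj E ends ([a,b,c,d,e]!i) ([a,b,c,d,e]!(Suc i mod length [a,b,c,d,e]))" using assms by auto
  qed
qed simp_all

lemma no6:
  assumes long: "long_noncontractible E ends F" and d: "distinct [a,b,c,d,e,f]"
    and "adj E ends a b" "adj E ends b c" "adj E ends c d" "adj E ends d e" "adj E ends e f" "adj E ends f a"
  shows False
proof (rule no_short_list[OF long d])
  show "\<forall>i<length [a,b,c,d,e,f]. adj E ends ([a,b,c,d,e,f]!i) ([a,b,c,d,e,f]!(Suc i mod length [a,b,c,d,e,f]))"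
  proof (intro allI impI)
    fix i assume "i < length [a,b,c,d,e,f]"
    then have "i = 0 \<or> i = 1 \<or> i = 2 \<or> i = 3 \<or> i = 4 \<or> i = 5" by auto
    then show "adj E ends ([a,b,c,d,e,f]!i) ([a,b,c,d,e,f]!(Suc i mod length [a,b,c,d,e,f]))" using assms by auto
  qed
qed simp_all

end


lemma card3_one: "card X = 3 \<Longrightarrow> a \<in> X \<Longrightarrow> \<exists>b c. b \<noteq> a \<and> c \<noteq> a \<and> b \<noteq> c \<and> X = {a,b,c}"
  by (auto simp: card_3_iff)

context lat888
begin

lemma card_nbrs:
  assumes v: "v\<in>V" shows "card {y. adj E ends v y} = 3"
proof -
  obtain a b c where abc: "inc_edges E ends v = {a,b,c}" "a\<noteq>b" "b\<noteq>c" "a\<noteq>c"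
    using triv[OF v] unfolding card_3_iff by metis
  have m: "a \<in> E" "v \<in> ends a" "b \<in> E" "v \<in> ends b" "c \<in> E" "v \<in> ends c"
    using abc(1) unfolding inc_edges_def by blast+
  obtain oa where oa: "oa \<noteq> v" "ends a = {v,oa}" using card2_other[OF card_ends[OF m(1)] m(2)] by metis
  obtain ob where ob: "ob \<noteq> v" "ends b = {v,ob}" using card2_other[OF card_ends[OF m(3)] m(4)] by metis
  obtain oc where oc: "oc \<noteq> v" "ends c = {v,oc}" using card2_other[OF card_ends[OF m(5)] m(6)] by metis
  have eq: "{y. adj E ends v y} = {oa,ob,oc}"
  proof
    show "{y. adj E ends v y} \<subseteq> {oa,ob,oc}"
    proof
      fix y assume "y \<in> {y. adj E ends v y}"
      then obtain g where g: "g\<in>E" "ends g = {v,y}" unfolding adj_def by blast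
      have yv: "y \<noteq> v" using card_ends[OF g(1)] g(2) by (cases "y = v") auto
      have "g \<in> inc_edges E ends v" using g by (simp add: inc_iff)
      then have "g = a \<or> g = b \<or> g = c" unfolding abc(1) by simp
      then show "y \<in> {oa,ob,oc}" using g(2) oa ob oc yv by (auto simp: doubleton_eq_iff)
    qed
    show "{oa,ob,oc} \<subseteq> {y. adj E ends v y}" using oa ob oc m unfolding adj_def by blast
  qed
  have "oa \<noteq> ob" using oa ob simple[of a b] m abc by auto
  moreover have "oa \<noteq> oc" using oa oc simple[of a c] m abc by auto
  moreover have "ob \<noteq> oc" using ob oc simple[of b c] m abc by auto
  ultimately show ?thesis unfolding eq by simp
qed

end

locale hset = lat888 +
  fixes u w' :: 'b and VH :: "'b set" and EH :: "'f set" and endsH :: "'f \<Rightarrow> 'b set"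
  assumes long: "long_noncontractible E ends F" and uV: "u \<in> V" and uw: "adj E ends u w'"
    and finEH: "finite EH" and endsH: "\<forall>g\<in>EH. endsH g \<subseteq> VH \<and> card (endsH g) = 2"
    and trivH: "trivalent VH EH endsH" and VHd: "VH = V - {u,w'}"
    and He: "\<forall>g\<in>EH. \<exists>x y. endsH g = {x,y} \<and> adj E ends x y"
begin

lemma H_other:
  assumes g: "g \<in> EH" "z \<in> endsH g"
  shows "\<exists>ov. ov \<noteq> z \<and> endsH g = {z,ov} \<and> ov \<in> VH \<and> adj E ends z ov"
proof -
  obtain ov where o: "ov \<noteq> z" "endsH g = {z,ov}" using card2_other[of "endsH g" z] endsH g by metis
  obtain x y where xy: "endsH g = {x,y}" "adj E ends x y" using He g by blast
  have "adj E ends z ov" using xy o adj_sym by (auto simp: doubleton_eq_iff)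
  moreover have "ov \<in> VH" using endsH g o by auto
  ultimately show ?thesis using o by blast
qed

lemma adjH_VH: "adj EH endsH x y \<Longrightarrow> x \<in> VH"
  unfolding adj_def using endsH by blast

lemma trivH': "z \<in> VH \<Longrightarrow> card (inc_edges EH endsH z) = 3"
  using trivH unfolding trivalent_def by blast

lemma uw_ne: "u \<noteq> w'" using adj_ne[OF uw] .

lemma pq:
  assumes z: "z \<in> VH" and a: "a = u \<or> a = w'" and za: "adj E ends z a"
  shows "\<exists>p q g1 g2. g1 \<in> EH \<and> g2 \<in> EH \<and> g1 \<noteq> g2 \<and> endsH g1 = {z,p} \<and> endsH g2 = {z,p}
      \<and> p \<in> VH \<and> p \<noteq> z \<and> adj E ends z p \<and> adj E ends p q \<and> \<not> adj EH endsH p q"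
proof -
  obtain h1 h2 h3 where I: "inc_edges EH endsH z = {h1,h2,h3}" "h1\<noteq>h2" "h2\<noteq>h3" "h1\<noteq>h3"
    using trivH'[OF z] unfolding card_3_iff by metis
  have hm: "h1 \<in> EH" "z \<in> endsH h1" "h2 \<in> EH" "z \<in> endsH h2" "h3 \<in> EH" "z \<in> endsH h3"
    using I(1) unfolding inc_edges_def by blast+
  obtain o1 where o1: "o1 \<noteq> z" "endsH h1 = {z,o1}" "o1 \<in> VH" "adj E ends z o1" using H_other[OF hm(1,2)] by blast
  obtain o2 where o2: "o2 \<noteq> z" "endsH h2 = {z,o2}" "o2 \<in> VH" "adj E ends z o2" using H_other[OF hm(3,4)] by blast
  obtain o3 where o3: "o3 \<noteq> z" "endsH h3 = {z,o3}" "o3 \<in> VH" "adj E ends z o3" using H_other[OF hm(5,6)] by blast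
  have zV: "z \<in> V" using z VHd by simp
  have aVH: "a \<notin> VH" using a VHd by auto
  have cn: "card {y. adj E ends z y} = 3" using card_nbrs[OF zV] .
  have finN: "finite {y. adj E ends z y}" using cn by (metis card.infinite zero_neq_numeral)
  have c2: "card ({y. adj E ends z y} - {a}) = 2" using cn za finN by simp
  have sub: "{o1,o2,o3} \<subseteq> {y. adj E ends z y} - {a}" using o1 o2 o3 aVH by auto
  have "card {o1,o2,o3} \<le> 2" using card_mono[OF _ sub] finN c2 by simp
  then have "o1 = o2 \<or> o1 = o3 \<or> o2 = o3" by (cases "o1 = o2 \<or> o1 = o3 \<or> o2 = o3") auto
  then obtain g1 g2 p where gp: "g1 \<in> EH" "g2 \<in> EH" "g1 \<noteq> g2" "endsH g1 = {z,p}" "endsH g2 = {z,p}"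
      "p \<in> VH" "p \<noteq> z" "adj E ends z p"
  proof (elim disjE)
    assume "o1 = o2" then show thesis using that[of h1 h2 o1] hm o1 o2 I by auto
  next
    assume "o1 = o3" then show thesis using that[of h1 h3 o1] hm o1 o3 I by auto
  next
    assume "o2 = o3" then show thesis using that[of h2 h3 o2] hm o2 o3 I by auto
  qed
  have pV: "p \<in> V" using gp(6) VHd by simp
  have gi: "g1 \<in> inc_edges EH endsH p" "g2 \<in> inc_edges EH endsH p" using gp(1,2,4,5) by (auto simp: inc_edges_def)
  obtain g3 where g3: "g3 \<noteq> g1" "g3 \<noteq> g2" "inc_edges EH endsH p = {g1,g2,g3}"
    using card3_other[OF trivH'[OF gp(6)] gi gp(3)] by metis
  have g3m: "g3 \<in> EH" "p \<in> endsH g3" using g3(3) unfolding inc_edges_def by blast+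
  obtain y3 where y3: "y3 \<noteq> p" "endsH g3 = {p,y3}" using H_other[OF g3m] by blast
  have Hn: "y = z \<or> y = y3" if Hy: "adj EH endsH p y" for y
  proof -
    obtain g where g: "g \<in> EH" "endsH g = {p,y}" using Hy unfolding adj_def by blast
    have yp: "y \<noteq> p" using endsH g by (cases "y = p") auto
    have "g \<in> inc_edges EH endsH p" using g by (simp add: inc_edges_def)
    then have "g = g1 \<or> g = g2 \<or> g = g3" unfolding g3(3) by simp
    then show ?thesis using g(2) gp(4,5) y3(2) yp by (auto simp: doubleton_eq_iff)
  qed
  have cp: "card {y. adj E ends p y} = 3" using card_nbrs[OF pV] .
  have "\<not> {y. adj E ends p y} \<subseteq> {z,y3}"
  proof
    assume "{y. adj E ends p y} \<subseteq> {z,y3}"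
    then have "card {y. adj E ends p y} \<le> card {z,y3}" by (intro card_mono) auto
    also have "\<dots> \<le> 2" by (simp add: card_insert_if)
    finally show False using cp by simp
  qed
  then obtain q where q: "adj E ends p q" "q \<noteq> z" "q \<noteq> y3" by blast
  have "\<not> adj EH endsH p q" using Hn q by blast
  then show ?thesis using gp q by blast
qed

lemma pnotA:
  assumes z: "z \<in> VH" and a: "a = u \<or> a = w'" and za: "adj E ends z a"
    and p: "p \<in> VH" "p \<noteq> z" "adj E ends z p" and b: "b = u \<or> b = w'"
  shows "\<not> adj E ends p b"
proof
  assume pb: "adj E ends p b"
  have aVH: "a \<notin> VH" "b \<notin> VH" using a b VHd by auto
  show False
  proof (cases "b = a")
    case True
    show False
      by (rule no3[OF long, of z p a]) (use z p aVH True pb za adj_sym in auto)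
  next
    case False
    then have ba: "adj E ends b a" using a b uw adj_sym by auto
    show False
      by (rule no4[OF long, of z p b a]) (use z p aVH False pb za ba adj_sym in auto)
  qed
qed

lemma pq_ne:
  assumes z: "z \<in> VH" "z' \<in> VH" "z \<noteq> z'"
    and a: "a = u \<or> a = w'" "adj E ends z a" and a': "a' = u \<or> a' = w'" "adj E ends z' a'"
    and g: "g1 \<in> EH" "g2 \<in> EH" "g1 \<noteq> g2" "endsH g1 = {z,p}" "endsH g2 = {z,p}"
      "p \<in> VH" "p \<noteq> z" "adj E ends z p" "adj E ends p q"
    and g': "g1' \<in> EH" "g2' \<in> EH" "g1' \<noteq> g2'" "endsH g1' = {z',p'}" "endsH g2' = {z',p'}"
      "p' \<in> VH" "p' \<noteq> z'" "adj E ends z' p'" "adj E ends p' q'"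
  shows "{p,q} \<noteq> {p',q'}"
proof
  assume eq: "{p,q} = {p',q'}"
  show False
  proof (cases "p = p'")
    case True
    have sub: "{g1,g2,g1',g2'} \<subseteq> inc_edges EH endsH p" using g g' True by (auto simp: inc_edges_def)
    have d: "{z,p} \<noteq> {z',p}" using z g(7) by (auto simp: doubleton_eq_iff)
    have dist: "distinct [g1,g2,g1',g2']" using g g' True d by auto
    have "card {g1,g2,g1',g2'} = 4" using distinct_card[OF dist] by simp
    moreover have "card {g1,g2,g1',g2'} \<le> card (inc_edges EH endsH p)"
      by (rule card_mono[OF _ sub]) (simp add: inc_edges_def finEH)
    ultimately show False using trivH'[OF g(6)] by simp
  next
    case False
    then have pq': "p = q'" "q = p'" using eq by (auto simp: doubleton_eq_iff)
    have pp': "adj E ends p p'" using g'(9) pq' adj_sym by simp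
    have nA: "\<not> adj E ends p u" "\<not> adj E ends p w'" using pnotA[OF z(1) a(1) a(2) g(6,7,8)] by auto
    have nA': "\<not> adj E ends p' u" "\<not> adj E ends p' w'" using pnotA[OF z(2) a'(1) a'(2) g'(6,7,8)] by auto
    have zp': "z \<noteq> p'" using a nA' by auto
    have z'p: "z' \<noteq> p" using a' nA by auto
    have aVH: "a \<notin> VH" "a' \<notin> VH" using a a' VHd by auto
    show False
    proof (cases "a = a'")
      case True
      show False
        by (rule no5[OF long, of z p p' z' a])
           (use z g g' aVH True zp' z'p False pp' a a' adj_sym in auto)
    next
      case ne: False
      then have aa: "adj E ends a' a" using a(1) a'(1) uw adj_sym by auto
      show False
        by (rule no6[OF long, of z p p' z' a' a])
           (use z g g' aVH ne zp' z'p False pp' a a' aa adj_sym in auto)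
    qed
  qed
qed

end


context hset
begin

lemma part2: "9 \<le> card {{x, y} | x y. adj E ends x y \<and> \<not> adj EH endsH x y}"
proof -
  let ?LH = "{{x, y} | x y. adj E ends x y \<and> \<not> adj EH endsH x y}"
  have uw': "u \<noteq> w'" by (rule uw_ne)
  have w'V: "w' \<in> V" using adj_V[OF uw] by simp
  have wu: "adj E ends w' u" using adj_sym[OF uw] .
  obtain x1 x2 where X: "x1 \<noteq> w'" "x2 \<noteq> w'" "x1 \<noteq> x2" "{y. adj E ends u y} = {w',x1,x2}"
    using card3_one[OF card_nbrs[OF uV], of w'] uw by auto
  obtain y1 y2 where Y: "y1 \<noteq> u" "y2 \<noteq> u" "y1 \<noteq> y2" "{y. adj E ends w' y} = {u,y1,y2}"
    using card3_one[OF card_nbrs[OF w'V], of u] wu by auto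
  have "x1 \<in> {y. adj E ends u y}" "x2 \<in> {y. adj E ends u y}" unfolding X(4) by simp_all
  then have ux: "adj E ends u x1" "adj E ends u x2" by simp_all
  have "y1 \<in> {y. adj E ends w' y}" "y2 \<in> {y. adj E ends w' y}" unfolding Y(4) by simp_all
  then have wy: "adj E ends w' y1" "adj E ends w' y2" by simp_all
  have xu: "x1 \<noteq> u" "x2 \<noteq> u" using adj_ne ux by auto
  have yw: "y1 \<noteq> w'" "y2 \<noteq> w'" using adj_ne wy by auto
  have xy: "x \<noteq> y" if "adj E ends u x" "adj E ends w' y" "x \<noteq> w'" for x y
  proof
    assume "x = y"
    show False
      by (rule no3[OF long, of u x w']) (use that \<open>x = y\<close> uw' adj_ne adj_sym wu in auto)
  qed
  have xy11: "x1 \<noteq> y1" using xy ux wy X by blast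
  have xy12: "x1 \<noteq> y2" using xy ux wy X by blast
  have xy21: "x2 \<noteq> y1" using xy ux wy X by blast
  have xy22: "x2 \<noteq> y2" using xy ux wy X by blast
  have VH1: "x1 \<in> VH" "x2 \<in> VH" "y1 \<in> VH" "y2 \<in> VH"
    using VHd adj_V ux wy X Y xu yw by auto
  have au: "u = u \<or> u = w'" and aw: "w' = u \<or> w' = w'" by simp_all
  have x1u: "adj E ends x1 u" "adj E ends x2 u" using adj_sym ux by auto
  have y1w: "adj E ends y1 w'" "adj E ends y2 w'" using adj_sym wy by auto
  obtain p1 q1 g11 g12 where P1: "g11 \<in> EH" "g12 \<in> EH" "g11 \<noteq> g12" "endsH g11 = {x1,p1}" "endsH g12 = {x1,p1}"
      "p1 \<in> VH" "p1 \<noteq> x1" "adj E ends x1 p1" "adj E ends p1 q1" "\<not> adj EH endsH p1 q1"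
    using pq[OF VH1(1) au x1u(1)] by blast
  obtain p2 q2 g21 g22 where P2: "g21 \<in> EH" "g22 \<in> EH" "g21 \<noteq> g22" "endsH g21 = {x2,p2}" "endsH g22 = {x2,p2}"
      "p2 \<in> VH" "p2 \<noteq> x2" "adj E ends x2 p2" "adj E ends p2 q2" "\<not> adj EH endsH p2 q2"
    using pq[OF VH1(2) au x1u(2)] by blast
  obtain p3 q3 g31 g32 where P3: "g31 \<in> EH" "g32 \<in> EH" "g31 \<noteq> g32" "endsH g31 = {y1,p3}" "endsH g32 = {y1,p3}"
      "p3 \<in> VH" "p3 \<noteq> y1" "adj E ends y1 p3" "adj E ends p3 q3" "\<not> adj EH endsH p3 q3"
    using pq[OF VH1(3) aw y1w(1)] by blast
  obtain p4 q4 g41 g42 where P4: "g41 \<in> EH" "g42 \<in> EH" "g41 \<noteq> g42" "endsH g41 = {y2,p4}" "endsH g42 = {y2,p4}"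
      "p4 \<in> VH" "p4 \<noteq> y2" "adj E ends y2 p4" "adj E ends p4 q4" "\<not> adj EH endsH p4 q4"
    using pq[OF VH1(4) aw y1w(2)] by blast
  have n12: "{p1,q1} \<noteq> {p2,q2}" by (rule pq_ne[OF VH1(1) VH1(2) X(3) au x1u(1) au x1u(2) P1(1-9) P2(1-9)])
  have n13: "{p1,q1} \<noteq> {p3,q3}" by (rule pq_ne[OF VH1(1) VH1(3) xy11 au x1u(1) aw y1w(1) P1(1-9) P3(1-9)])
  have n14: "{p1,q1} \<noteq> {p4,q4}" by (rule pq_ne[OF VH1(1) VH1(4) xy12 au x1u(1) aw y1w(2) P1(1-9) P4(1-9)])
  have n23: "{p2,q2} \<noteq> {p3,q3}" by (rule pq_ne[OF VH1(2) VH1(3) xy21 au x1u(2) aw y1w(1) P2(1-9) P3(1-9)])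
  have n24: "{p2,q2} \<noteq> {p4,q4}" by (rule pq_ne[OF VH1(2) VH1(4) xy22 au x1u(2) aw y1w(2) P2(1-9) P4(1-9)])
  have n34: "{p3,q3} \<noteq> {p4,q4}" by (rule pq_ne[OF VH1(3) VH1(4) Y(3) aw y1w(1) aw y1w(2) P3(1-9) P4(1-9)])
  have pA: "p1 \<noteq> u" "p1 \<noteq> w'" "p2 \<noteq> u" "p2 \<noteq> w'" "p3 \<noteq> u" "p3 \<noteq> w'" "p4 \<noteq> u" "p4 \<noteq> w'"
    using P1(6) P2(6) P3(6) P4(6) VHd by auto
  have nq1: "\<not> adj E ends p1 u" "\<not> adj E ends p1 w'" using pnotA[OF VH1(1) au x1u(1) P1(6,7,8)] by auto
  have nq2: "\<not> adj E ends p2 u" "\<not> adj E ends p2 w'" using pnotA[OF VH1(2) au x1u(2) P2(6,7,8)] by auto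
  have nq3: "\<not> adj E ends p3 u" "\<not> adj E ends p3 w'" using pnotA[OF VH1(3) aw y1w(1) P3(6,7,8)] by auto
  have nq4: "\<not> adj E ends p4 u" "\<not> adj E ends p4 w'" using pnotA[OF VH1(4) aw y1w(2) P4(6,7,8)] by auto
  have qA: "q1 \<noteq> u" "q1 \<noteq> w'" "q2 \<noteq> u" "q2 \<noteq> w'" "q3 \<noteq> u" "q3 \<noteq> w'" "q4 \<noteq> u" "q4 \<noteq> w'"
    using nq1 nq2 nq3 nq4 P1(9) P2(9) P3(9) P4(9) by auto
  define L1 where "L1 = [{u,w'},{u,x1},{u,x2},{w',y1},{w',y2}]"
  define L2 where "L2 = [{p1,q1},{p2,q2},{p3,q3},{p4,q4}]"
  have d1: "distinct L1" unfolding L1_def using uw' X Y xu yw by (auto simp: doubleton_eq_iff)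
  have d2: "distinct L2" unfolding L2_def using n12 n13 n14 n23 n24 n34 by auto
  have d12: "set L1 \<inter> set L2 = {}" unfolding L1_def L2_def using pA qA by (auto simp: doubleton_eq_iff)
  have dL: "distinct (L1 @ L2)" using d1 d2 d12 by simp
  have cL: "card (set (L1 @ L2)) = 9" using distinct_card[OF dL] unfolding L1_def L2_def by simp
  have noH: "\<not> adj EH endsH x y" if "x = u \<or> x = w'" for x y
  proof
    assume "adj EH endsH x y"
    then have "x \<in> VH" by (rule adjH_VH)
    then show False using that VHd by auto
  qed
  have sub: "set (L1 @ L2) \<subseteq> ?LH"
  proof -
    have "{u,w'} \<in> ?LH" using uw noH by blast
    moreover have "{u,x1} \<in> ?LH" using ux noH by blast
    moreover have "{u,x2} \<in> ?LH" using ux noH by blast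
    moreover have "{w',y1} \<in> ?LH" using wy noH by blast
    moreover have "{w',y2} \<in> ?LH" using wy noH by blast
    moreover have "{p1,q1} \<in> ?LH" using P1 by blast
    moreover have "{p2,q2} \<in> ?LH" using P2 by blast
    moreover have "{p3,q3} \<in> ?LH" using P3 by blast
    moreover have "{p4,q4} \<in> ?LH" using P4 by blast
    ultimately show ?thesis unfolding L1_def L2_def by simp
  qed
  have fin: "finite ?LH"
  proof (rule finite_subset)
    show "?LH \<subseteq> ends ` E" unfolding adj_def by auto
    show "finite (ends ` E)" using finE by simp
  qed
  have "card (set (L1 @ L2)) \<le> card ?LH" by (rule card_mono[OF fin sub])
  then show ?thesis using cL by simp
qed

end

theorem mainTheorem3:
  fixes V :: "'v set" and E :: "'e set" and ends :: "'e \<Rightarrow> 'v set"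
    and F :: "'e set set" and fc :: "'e set \<Rightarrow> colour"
    and u w :: 'v and e :: 'e
  assumes G: "lattice_888 V E ends F fc"
    and long: "long_noncontractible E ends F"
    and u: "u \<in> V" and e: "e \<in> E" and ends_e: "ends e = {u, w}"
  shows "Lcount (adj E ends) (adj (sp_edges F fc ends u w e) (sp_ends ends)) = 9
    \<and> (\<forall>(VH :: 'v set) (EH :: 'f set) (endsH :: 'f \<Rightarrow> 'v set) (FH :: 'f set set) w'.
          cellular_map VH EH endsH FH \<and> trivalent VH EH endsH
          \<and> (\<exists>fcH :: 'f set \<Rightarrow> colour. proper_face_col FH fcH)
          \<and> euler_char VH EH FH = euler_char V E F
          \<and> (orientable endsH FH \<longleftrightarrow> orientable ends F)
          \<and> adj E ends u w' \<and> VH = V - {u, w'}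
          \<and> (\<forall>g\<in>EH. \<exists>x y. endsH g = {x, y} \<and> adj E ends x y)
          \<longrightarrow> Lcount (adj E ends) (adj (sp_edges F fc ends u w e) (sp_ends ends))
              \<le> Lcount (adj E ends) (adj EH endsH))"
proof -
  interpret lat888 V E ends F fc using G by unfold_locales
  have p1: "Lcount (adj E ends) (adj (sp_edges F fc ends u w e) (sp_ends ends)) = 9"
    by (rule part1[OF e ends_e])
  show ?thesis
  proof (intro conjI allI impI)
    show "Lcount (adj E ends) (adj (sp_edges F fc ends u w e) (sp_ends ends)) = 9" by (rule p1)
    fix VH :: "'v set" and EH :: "'f set" and endsH :: "'f \<Rightarrow> 'v set" and FH :: "'f set set" and w'
    assume H: "cellular_map VH EH endsH FH \<and> trivalent VH EH endsH
          \<and> (\<exists>fcH :: 'f set \<Rightarrow> colour. proper_face_col FH fcH)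
          \<and> euler_char VH EH FH = euler_char V E F
          \<and> (orientable endsH FH \<longleftrightarrow> orientable ends F)
          \<and> adj E ends u w' \<and> VH = V - {u, w'}
          \<and> (\<forall>g\<in>EH. \<exists>x y. endsH g = {x, y} \<and> adj E ends x y)"
    have cm: "cellular_map VH EH endsH FH" using H by blast
    have hs: "hset V E ends F fc u w' VH EH endsH"
    proof (unfold_locales)
      show "long_noncontractible E ends F" by (rule long)
      show "u \<in> V" by (rule u)
      show "adj E ends u w'" using H by blast
      show "finite EH" using cm unfolding cellular_map_def by blast
      show "\<forall>g\<in>EH. endsH g \<subseteq> VH \<and> card (endsH g) = 2" using cm unfolding cellular_map_def by blast
      show "trivalent VH EH endsH" using H by blast
      show "VH = V - {u, w'}" using H by blast
      show "\<forall>g\<in>EH. \<exists>x y. endsH g = {x, y} \<and> adj E ends x y" using H by blast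
    qed
    have "9 \<le> card {{x, y} | x y. adj E ends x y \<and> \<not> adj EH endsH x y}"
      by (rule hset.part2[OF hs])
    then show "Lcount (adj E ends) (adj (sp_edges F fc ends u w e) (sp_ends ends))
              \<le> Lcount (adj E ends) (adj EH endsH)" using p1 unfolding Lcount_def by simp
  qed
qed

end
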